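(* Let $\lambda$ be a normalized additively alternating $n\times n$ complex matrix of rank $n-1$, and let $I\subseteq\{0,\dots,n-1\}$ be the vertex set of a cycle of smoothable edges in the smoothing diagram of $\lambda$. Then: (1) every smoothable edge with both endpoints in $I$ (resp. both outside $I$) has all its colored angles with vertex in $I$ (resp. outside $I$); (2) the submatrix $(\lambda_{ij})_{i,j\in I}$ is normalized of corank one, and its smoothing diagram consists of the given cycle on $I$, with the same colorings of edges and angles; (3) $\lambda_{i_1j}=\lambda_{i_2j}$ for all $i_1,i_2\in I$ and $j\notin I$.
   Context: Additively alternating: $\lambda_{ji}=-\lambda_{ij}$; normalized: rows sum to $0$. The biresidue matrix of a normalized $\lambda$ of rank $m-1$ (size $m$) is the unique normalized alternating $b$ with $b|_\Delta=(\lambda|_\Delta)^{-1}$, $\Delta=\{z\in\mathbb{C}^m:\sum z_i=0\}$. Smoothing diagram of $\lambda$: the complete graph on the index set, where an edge $\{i,j\}$ is colored (smoothable) if $b_{ij}\ne0$ and $\theta_k:=(b_{jk}+b_{ki})/b_{ij}\in\mathbb{Z}_{\ge0}$ for all $k\ne i,j$, and for such an edge the angle $i-k-j$ is colored (darkly if $\theta_k=2$, lightly if $\theta_k=1$) whenever $\theta_k\ne0$. A cycle of smoothable edges is a sequence of $m\ge3$ distinct vertices $i_1,\dots,i_m$ with $\{i_1,i_2\},\dots,\{i_{m-1},i_m\},\{i_m,i_1\}$ all smoothable. *)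

theory Defs
  imports Complex_Main "Jordan_Normal_Form.DL_Rank"
begin

text \<open>Matrices are functions nat => nat => complex, considered on a finite index set S
  (for the full matrix S = {..<n}; for a principal submatrix S = I, keeping original indices).\<close>

definition add_alternating :: "nat set \<Rightarrow> (nat \<Rightarrow> nat \<Rightarrow> complex) \<Rightarrow> bool" where
  "add_alternating S lam \<longleftrightarrow> (\<forall>i\<in>S. \<forall>j\<in>S. lam j i = - lam i j)"

definition normalized :: "nat set \<Rightarrow> (nat \<Rightarrow> nat \<Rightarrow> complex) \<Rightarrow> bool" where
  "normalized S lam \<longleftrightarrow> (\<forall>i\<in>S. (\<Sum>j\<in>S. lam i j) = 0)"

definition to_mat :: "nat set \<Rightarrow> (nat \<Rightarrow> nat \<Rightarrow> complex) \<Rightarrow> complex mat" where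
  "to_mat S lam = mat (card S) (card S)
     (\<lambda>(a, b). lam (sorted_list_of_set S ! a) (sorted_list_of_set S ! b))"

definition mrank :: "nat set \<Rightarrow> (nat \<Rightarrow> nat \<Rightarrow> complex) \<Rightarrow> nat" where
  "mrank S lam = vec_space.rank (card S) (to_mat S lam)"

text \<open>b is a biresidue matrix of lam on S: normalized, alternating, and b restricted to
  Delta = {z. sum z = 0} inverts lam restricted to Delta (b maps Delta into Delta automatically
  since b is normalized alternating).\<close>
definition is_biresidue :: "nat set \<Rightarrow> (nat \<Rightarrow> nat \<Rightarrow> complex) \<Rightarrow> (nat \<Rightarrow> nat \<Rightarrow> complex) \<Rightarrow> bool" where
  "is_biresidue S lam b \<longleftrightarrow> add_alternating S b \<and> normalized S b \<and>
     (\<forall>z::nat \<Rightarrow> complex. (\<Sum>i\<in>S. z i) = 0 \<longrightarrow>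
        (\<forall>i\<in>S. (\<Sum>j\<in>S. lam i j * (\<Sum>k\<in>S. b j k * z k)) = z i))"

definition biresidue :: "nat set \<Rightarrow> (nat \<Rightarrow> nat \<Rightarrow> complex) \<Rightarrow> (nat \<Rightarrow> nat \<Rightarrow> complex)" where
  "biresidue S lam = (THE b. is_biresidue S lam b \<and> (\<forall>i j. i \<notin> S \<or> j \<notin> S \<longrightarrow> b i j = 0))"

definition theta :: "nat set \<Rightarrow> (nat \<Rightarrow> nat \<Rightarrow> complex) \<Rightarrow> nat \<Rightarrow> nat \<Rightarrow> nat \<Rightarrow> complex" where
  "theta S lam i j k = (let b = biresidue S lam in (b j k + b k i) / b i j)"

definition smoothable :: "nat set \<Rightarrow> (nat \<Rightarrow> nat \<Rightarrow> complex) \<Rightarrow> nat \<Rightarrow> nat \<Rightarrow> bool" where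
  "smoothable S lam i j \<longleftrightarrow> i \<in> S \<and> j \<in> S \<and> i \<noteq> j \<and> biresidue S lam i j \<noteq> 0 \<and>
     (\<forall>k\<in>S - {i, j}. \<exists>m::nat. theta S lam i j k = of_nat m)"

text \<open>Angle i-k-j (vertex k) of the smoothable edge {i,j}.\<close>
definition angle_colored :: "nat set \<Rightarrow> (nat \<Rightarrow> nat \<Rightarrow> complex) \<Rightarrow> nat \<Rightarrow> nat \<Rightarrow> nat \<Rightarrow> bool" where
  "angle_colored S lam i j k \<longleftrightarrow> smoothable S lam i j \<and> k \<in> S - {i, j} \<and> theta S lam i j k \<noteq> 0"

definition angle_dark :: "nat set \<Rightarrow> (nat \<Rightarrow> nat \<Rightarrow> complex) \<Rightarrow> nat \<Rightarrow> nat \<Rightarrow> nat \<Rightarrow> bool" where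
  "angle_dark S lam i j k \<longleftrightarrow> smoothable S lam i j \<and> k \<in> S - {i, j} \<and> theta S lam i j k = 2"

definition angle_light :: "nat set \<Rightarrow> (nat \<Rightarrow> nat \<Rightarrow> complex) \<Rightarrow> nat \<Rightarrow> nat \<Rightarrow> nat \<Rightarrow> bool" where
  "angle_light S lam i j k \<longleftrightarrow> smoothable S lam i j \<and> k \<in> S - {i, j} \<and> theta S lam i j k = 1"

definition smooth_cycle :: "nat set \<Rightarrow> (nat \<Rightarrow> nat \<Rightarrow> complex) \<Rightarrow> nat list \<Rightarrow> bool" where
  "smooth_cycle S lam cs \<longleftrightarrow> distinct cs \<and> length cs \<ge> 3 \<and> set cs \<subseteq> S \<and>
     (\<forall>t < length cs. smoothable S lam (cs ! t) (cs ! ((t + 1) mod length cs)))"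

definition cycle_edge :: "nat list \<Rightarrow> nat \<Rightarrow> nat \<Rightarrow> bool" where
  "cycle_edge cs i j \<longleftrightarrow> (\<exists>t < length cs. {i, j} = {cs ! t, cs ! ((t + 1) mod length cs)})"

end

theory Submission
  imports Defs
begin


definition smb :: "nat set \<Rightarrow> (nat \<Rightarrow> nat \<Rightarrow> complex) \<Rightarrow> nat \<Rightarrow> nat \<Rightarrow> bool" where
  "smb S b i j \<longleftrightarrow> i \<in> S \<and> j \<in> S \<and> i \<noteq> j \<and> b i j \<noteq> 0 \<and>
     (\<forall>k\<in>S - {i, j}. \<exists>m::nat. (b j k + b k i) / b i j = of_nat m)"

lemma sum_shift_mod:
  assumes "0 < (m::nat)"
  shows "(\<Sum>t<m. g (Suc t mod m)) = (\<Sum>t<m. (g t :: complex))"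
proof -
  obtain m' where m: "m = Suc m'" using assms by (cases m) auto
  have "(\<Sum>t<Suc m'. g (Suc t mod Suc m')) = (\<Sum>t<m'. g (Suc t mod Suc m')) + g (Suc m' mod Suc m')"
    by simp
  also have "(\<Sum>t<m'. g (Suc t mod Suc m')) = (\<Sum>t<m'. g (Suc t))"
    by (rule sum.cong) auto
  also have "g (Suc m' mod Suc m') = g 0" by simp
  also have "(\<Sum>t<m'. g (Suc t)) + g 0 = (\<Sum>t<Suc m'. g t)"
    by (subst sum.lessThan_Suc_shift) simp
  finally show ?thesis using m by simp
qed

lemma cycle_A:
  fixes f :: "nat \<Rightarrow> nat" and b :: "nat \<Rightarrow> nat \<Rightarrow> complex"
  assumes m3: "3 \<le> m" and inj: "inj_on f {..<m}" and img: "f ` {..<m} \<subseteq> S"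
    and sm: "\<forall>t<m. smb S b (f t) (f (Suc t mod m))"
    and alt: "\<forall>i\<in>S. \<forall>j\<in>S. b j i = - b i j"
    and t: "t < m" and k: "k \<in> S - f ` {..<m}"
  shows "b (f (Suc t mod m)) k + b k (f t) = 0"
proof -
  define \<beta> where "\<beta> t = b (f t) (f (Suc t mod m))" for t
  have \<beta>nz: "\<beta> t \<noteq> 0" if "t < m" for t using sm that unfolding smb_def \<beta>_def by auto
  have nat_th: "\<exists>q::nat. b (f (Suc t mod m)) x + b x (f t) = of_nat q * \<beta> t"
    if "t < m" "x \<in> S" "x \<noteq> f t" "x \<noteq> f (Suc t mod m)" for t x
  proof -
    from sm that obtain q :: nat where q: "(b (f (Suc t mod m)) x + b x (f t)) / \<beta> t = of_nat q"
      unfolding smb_def \<beta>_def by fastforce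
    then show ?thesis using \<beta>nz[OF that(1)] by (intro exI[of _ q]) (simp add: field_simps)
  qed
  have rel: "\<exists>x y::nat. \<beta> (Suc t) = \<beta> t * (1 + of_nat x) / (1 + of_nat y)" if st: "Suc t < m" for t
  proof -
    have tm: "t < m" using that by simp
    let ?s = "Suc t" let ?u = "Suc (Suc t) mod m"
    have smod: "Suc t mod m = Suc t" using that by simp
    have um: "?u < m" using m3 by simp
    have ut: "?u \<noteq> t" using m3 that
      by (metis Suc_lessI less_not_refl mod_Suc mod_less n_not_Suc_n numeral_3_eq_3 Suc_le_eq
          le_antisym less_Suc_eq nat.inject)
    have us: "?u \<noteq> Suc t"
    proof (cases "Suc (Suc t) < m")
      case True then show ?thesis by simp
    next
      case False then have "Suc (Suc t) = m" using that by simp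
      then show ?thesis by simp
    qed
    have fu_ne1: "f ?u \<noteq> f t" "f ?u \<noteq> f (Suc t)"
      using inj um tm that ut us unfolding inj_on_def by auto
    have fu_ne2: "f t \<noteq> f (Suc t)" using inj tm that by (metis inj_on_def lessThan_iff n_not_Suc_n)
    note fu_ne = fu_ne1 fu_ne2
    have inS: "f ?u \<in> S" "f t \<in> S" "f (Suc t) \<in> S" using img um tm that by auto
    obtain x :: nat where x: "b (f (Suc t)) (f ?u) + b (f ?u) (f t) = of_nat x * \<beta> t"
      using nat_th[OF tm inS(1)] fu_ne smod by auto
    obtain y :: nat where y: "b (f ?u) (f t) + b (f t) (f (Suc t)) = of_nat y * \<beta> (Suc t)"
      using nat_th[OF st inS(2)] fu_ne by (auto simp: mod_Suc)
    have bt: "\<beta> t = b (f t) (f (Suc t))" using smod unfolding \<beta>_def by simp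
    have bs: "\<beta> (Suc t) = b (f (Suc t)) (f ?u)" unfolding \<beta>_def by simp
    have eq: "\<beta> (Suc t) * (1 + of_nat y) = \<beta> t * (1 + of_nat x)"
      using x y bt bs by (simp add: algebra_simps) (metis add.commute add_diff_cancel_left' diff_add_eq)
    have "(1 + of_nat y :: complex) \<noteq> 0"
      by (metis of_nat_Suc of_nat_eq_0_iff add.commute nat.distinct(1))
    then show ?thesis using eq by (intro exI[of _ x] exI[of _ y]) (simp add: field_simps)
  qed
  have pos: "\<exists>r>0. \<beta> t = complex_of_real r * \<beta> 0" if "t < m" for t
    using that
  proof (induction t)
    case 0 then show ?case by (intro exI[of _ 1]) simp
  next
    case (Suc t)
    then obtain r where r: "r > 0" "\<beta> t = complex_of_real r * \<beta> 0" by auto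
    obtain x y :: nat where xy: "\<beta> (Suc t) = \<beta> t * (1 + of_nat x) / (1 + of_nat y)"
      using rel[OF Suc.prems] by auto
    have "\<beta> (Suc t) = complex_of_real (r * (1 + real x) / (1 + real y)) * \<beta> 0"
      using xy r by simp
    moreover have "r * (1 + real x) / (1 + real y) > 0" using r by simp
    ultimately show ?case by blast
  qed
  have kS: "k \<in> S" and kn: "\<And>t. t < m \<Longrightarrow> k \<noteq> f t" using k by auto
  have "\<forall>t. \<exists>q::nat. t < m \<longrightarrow> b (f (Suc t mod m)) k + b k (f t) = of_nat q * \<beta> t"
    using nat_th kS kn by (metis mod_less_divisor m3 order_less_le_trans zero_less_numeral)
  then obtain q :: "nat \<Rightarrow> nat" where q: "\<And>t. t < m \<Longrightarrow> b (f (Suc t mod m)) k + b k (f t) = of_nat (q t) * \<beta> t"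
    by metis
  have "\<forall>t. \<exists>r. t < m \<longrightarrow> r > 0 \<and> \<beta> t = complex_of_real r * \<beta> 0" using pos by blast
  then obtain r :: "nat \<Rightarrow> real" where r: "\<And>t. t < m \<Longrightarrow> r t > 0 \<and> \<beta> t = complex_of_real (r t) * \<beta> 0"
    by metis
  have m0: "0 < m" using m3 by simp
  have "(\<Sum>t<m. b (f (Suc t mod m)) k + b k (f t)) = (\<Sum>t<m. b k (f t) - b k (f (Suc t mod m)))"
  proof (rule sum.cong)
    fix t assume "t \<in> {..<m}"
    then have "f (Suc t mod m) \<in> S" using img m0 by auto
    then have e: "b (f (Suc t mod m)) k = - b k (f (Suc t mod m))" using alt kS by blast
    show "b (f (Suc t mod m)) k + b k (f t) = b k (f t) - b k (f (Suc t mod m))"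
      by (simp add: e)
  qed simp
  also have "\<dots> = 0"
    using sum_shift_mod[OF m0, of "\<lambda>t. b k (f t)"] by (simp add: sum_subtractf)
  finally have "(\<Sum>t<m. of_nat (q t) * \<beta> t) = 0"
    using q by (metis (no_types, lifting) lessThan_iff sum.cong)
  moreover have "(\<Sum>t<m. of_nat (q t) * \<beta> t) = (\<Sum>t<m. complex_of_real (real (q t) * r t)) * \<beta> 0"
    unfolding sum_distrib_right
  proof (rule sum.cong[OF refl])
    fix t assume "t \<in> {..<m}"
    then have "\<beta> t = complex_of_real (r t) * \<beta> 0" using r by blast
    then show "of_nat (q t) * \<beta> t = complex_of_real (real (q t) * r t) * \<beta> 0" by simp
  qed
  ultimately have "(\<Sum>t<m. complex_of_real (real (q t) * r t)) * \<beta> 0 = 0" by simp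
  then have "(\<Sum>t<m. complex_of_real (real (q t) * r t)) = 0" using \<beta>nz m0 by simp
  then have s0: "(\<Sum>t<m. real (q t) * r t) = 0"
    by (metis of_real_eq_0_iff of_real_sum)
  have "\<forall>t\<in>{..<m}. real (q t) * r t = 0"
    using sum_nonneg_eq_0_iff[of "{..<m}" "\<lambda>t. real (q t) * r t"] s0 r by (simp add: less_imp_le)
  then have "q t = 0" using r t by fastforce
  then show ?thesis using q t by simp
qed


definition KC :: "nat set \<Rightarrow> (nat \<Rightarrow> nat \<Rightarrow> complex) \<Rightarrow> bool" where
  "KC S lam \<longleftrightarrow> (\<forall>u. (\<forall>i\<in>S. (\<Sum>j\<in>S. lam i j * u j) = 0) \<longrightarrow> (\<forall>i\<in>S. \<forall>j\<in>S. u i = u j))"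

definition ix :: "nat set \<Rightarrow> nat \<Rightarrow> nat" where
  "ix S j = inv_into {..<card S} ((!) (sorted_list_of_set S)) j"

definition Mt :: "nat set \<Rightarrow> (nat \<Rightarrow> nat \<Rightarrow> complex) \<Rightarrow> complex mat" where
  "Mt S lam = mat (card S) (card S)
     (\<lambda>(a, c). lam (sorted_list_of_set S ! a) (sorted_list_of_set S ! c) + 1)"

lemma bij_s:
  assumes "finite S"
  shows "bij_betw ((!) (sorted_list_of_set S)) {..<card S} S"
proof -
  have "bij_betw ((!) (sorted_list_of_set S)) {..<length (sorted_list_of_set S)} (set (sorted_list_of_set S))"
    by (rule bij_betw_nth) auto
  then show ?thesis using assms by simp
qed

lemma sumS:
  assumes "finite S"
  shows "(\<Sum>j\<in>S. g j) = (\<Sum>c<card S. g (sorted_list_of_set S ! c))"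
  using sum.reindex_bij_betw[OF bij_s[OF assms], of g] by simp

lemma nthS: "finite S \<Longrightarrow> c < card S \<Longrightarrow> sorted_list_of_set S ! c \<in> S"
  using bij_s bij_betwE by blast

lemma ix_nth: "finite S \<Longrightarrow> c < card S \<Longrightarrow> ix S (sorted_list_of_set S ! c) = c"
  unfolding ix_def using bij_s bij_betw_imp_inj_on inv_into_f_f by (metis lessThan_iff)

lemma nth_ix: "finite S \<Longrightarrow> j \<in> S \<Longrightarrow> sorted_list_of_set S ! (ix S j) = j \<and> ix S j < card S"
  unfolding ix_def using bij_s
  by (metis bij_betw_imp_surj_on f_inv_into_f inv_into_into lessThan_iff)

lemma mv_entry:
  assumes "a < N" "dim_vec v = N"
  shows "(mat N N f *\<^sub>v v) $ a = (\<Sum>c<N. f (a, c) * v $ c)"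
proof -
  have "(mat N N f *\<^sub>v v) $ a = row (mat N N f) a \<bullet> v" using assms by simp
  also have "\<dots> = (\<Sum>c\<in>{0..<N}. row (mat N N f) a $ c * v $ c)"
    unfolding scalar_prod_def using assms by simp
  also have "\<dots> = (\<Sum>c<N. f (a, c) * v $ c)"
    unfolding lessThan_atLeast0[symmetric] using assms by (intro sum.cong) auto
  finally show ?thesis .
qed

lemma colsum:
  assumes "add_alternating S lam" "normalized S lam" "j \<in> S"
  shows "(\<Sum>i\<in>S. lam i j) = 0"
proof -
  have "(\<Sum>i\<in>S. lam i j) = (\<Sum>i\<in>S. - lam j i)"
  proof (rule sum.cong[OF refl])
    fix i assume "i \<in> S"
    then show "lam i j = - lam j i" using assms(1,3) unfolding add_alternating_def by blast
  qed
  also have "\<dots> = - (\<Sum>i\<in>S. lam j i)" by (simp add: sum_negf)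
  finally show ?thesis using assms(2,3) unfolding normalized_def by simp
qed

lemma ker_plus:
  assumes fin: "finite S" and ne: "S \<noteq> {}" and alt: "add_alternating S lam"
    and nrm: "normalized S lam"
    and eq: "\<forall>i\<in>S. (\<Sum>j\<in>S. lam i j * u j) + (\<Sum>j\<in>S. u j) = z i" and zs: "(\<Sum>i\<in>S. z i) = 0"
  shows "(\<Sum>j\<in>S. u j) = 0 \<and> (\<forall>i\<in>S. (\<Sum>j\<in>S. lam i j * u j) = z i)"
proof -
  have "(\<Sum>i\<in>S. \<Sum>j\<in>S. lam i j * u j) = (\<Sum>j\<in>S. \<Sum>i\<in>S. lam i j * u j)" by (rule sum.swap)
  also have "\<dots> = (\<Sum>j\<in>S. (\<Sum>i\<in>S. lam i j) * u j)" by (simp add: sum_distrib_right)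
  also have "\<dots> = 0" using colsum[OF alt nrm] by simp
  finally have s0: "(\<Sum>i\<in>S. \<Sum>j\<in>S. lam i j * u j) = 0" .
  have "(\<Sum>i\<in>S. z i) = (\<Sum>i\<in>S. (\<Sum>j\<in>S. lam i j * u j) + (\<Sum>j\<in>S. u j))"
    using eq by simp
  also have "\<dots> = of_nat (card S) * (\<Sum>j\<in>S. u j)" using s0 by (simp add: sum.distrib)
  finally have "of_nat (card S) * (\<Sum>j\<in>S. u j) = 0" using zs by simp
  moreover have "card S \<noteq> 0" using fin ne by simp
  ultimately have su: "(\<Sum>j\<in>S. u j) = 0" by simp
  then show ?thesis using eq by simp
qed

lemma ker_zero:
  assumes fin: "finite S" and ne: "S \<noteq> {}" and alt: "add_alternating S lam"
    and nrm: "normalized S lam" and kc: "KC S lam"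
    and eq: "\<forall>i\<in>S. (\<Sum>j\<in>S. lam i j * u j) + (\<Sum>j\<in>S. u j) = 0"
  shows "\<forall>j\<in>S. u j = 0"
proof -
  from ker_plus[OF fin ne alt nrm, of u "\<lambda>_. 0"] eq
  have su: "(\<Sum>j\<in>S. u j) = 0" and k: "\<forall>i\<in>S. (\<Sum>j\<in>S. lam i j * u j) = 0" by auto
  from k kc have const: "\<forall>i\<in>S. \<forall>j\<in>S. u i = u j" unfolding KC_def by blast
  obtain i0 where i0: "i0 \<in> S" using ne by auto
  have "(\<Sum>j\<in>S. u j) = (\<Sum>j\<in>S. u i0)"
  proof (rule sum.cong[OF refl])
    fix j assume "j \<in> S" then show "u j = u i0" using const i0 by blast
  qed
  then have "of_nat (card S) * u i0 = 0" using su by simp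
  then have "u i0 = 0" using fin ne by simp
  then show ?thesis using const i0 by (metis (no_types))
qed

lemma Mt_carrier: "Mt S lam \<in> carrier_mat (card S) (card S)"
  unfolding Mt_def by simp

lemma Mt_expand:
  assumes fin: "finite S" and x: "x \<in> carrier_vec (card S)" and i: "i \<in> S"
  shows "(Mt S lam *\<^sub>v x) $ (ix S i) =
     (\<Sum>j\<in>S. lam i j * x $ (ix S j)) + (\<Sum>j\<in>S. x $ (ix S j))"
proof -
  let ?s = "sorted_list_of_set S"
  have a: "ix S i < card S" "?s ! (ix S i) = i" using nth_ix[OF fin i] by auto
  have "(Mt S lam *\<^sub>v x) $ (ix S i) = (\<Sum>c<card S. (lam i (?s ! c) + 1) * x $ c)"
  proof -
    have dx: "dim_vec x = card S" using x by simp
    show ?thesis unfolding Mt_def mv_entry[OF a(1) dx] using a(2) by simp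
  qed
  also have "\<dots> = (\<Sum>c<card S. (lam i (?s ! c) + 1) * x $ (ix S (?s ! c)))"
    using ix_nth[OF fin] by (intro sum.cong) auto
  also have "\<dots> = (\<Sum>j\<in>S. (lam i j + 1) * x $ (ix S j))"
    using sumS[OF fin, of "\<lambda>j. (lam i j + 1) * x $ (ix S j)"] by simp
  also have "\<dots> = (\<Sum>j\<in>S. lam i j * x $ (ix S j)) + (\<Sum>j\<in>S. x $ (ix S j))"
    by (simp add: distrib_right sum.distrib)
  finally show ?thesis .
qed

lemma Mt_det:
  assumes fin: "finite S" and ne: "S \<noteq> {}" and alt: "add_alternating S lam"
    and nrm: "normalized S lam" and kc: "KC S lam"
  shows "det (Mt S lam) \<noteq> 0"
proof
  assume "det (Mt S lam) = 0"
  then obtain v where v: "v \<in> carrier_vec (card S)" "v \<noteq> 0\<^sub>v (card S)" "Mt S lam *\<^sub>v v = 0\<^sub>v (card S)"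
    using det_0_iff_vec_prod_zero_field[OF Mt_carrier] by blast
  have "\<forall>i\<in>S. (\<Sum>j\<in>S. lam i j * v $ (ix S j)) + (\<Sum>j\<in>S. v $ (ix S j)) = 0"
  proof
    fix i assume i: "i \<in> S"
    have "ix S i < card S" using nth_ix[OF fin i] by auto
    then show "(\<Sum>j\<in>S. lam i j * v $ (ix S j)) + (\<Sum>j\<in>S. v $ (ix S j)) = 0"
      using Mt_expand[OF fin v(1) i, of lam] v(3) by simp
  qed
  from ker_zero[OF fin ne alt nrm kc this] have z: "\<forall>j\<in>S. v $ (ix S j) = 0" .
  have "v = 0\<^sub>v (card S)"
  proof (rule eq_vecI)
    fix c assume "c < dim_vec (0\<^sub>v (card S) :: complex vec)"
    then have c: "c < card S" by simp
    then have "v $ c = v $ (ix S (sorted_list_of_set S ! c))" using ix_nth[OF fin c] by simp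
    also have "\<dots> = 0" using z nthS[OF fin c] by blast
    finally show "v $ c = 0\<^sub>v (card S) $ c" using c by simp
  qed (use v in simp)
  then show False using v(2) by simp
qed

lemma surjS:
  assumes fin: "finite S" and ne: "S \<noteq> {}" and alt: "add_alternating S lam"
    and nrm: "normalized S lam" and kc: "KC S lam" and zs: "(\<Sum>i\<in>S. z i) = 0"
  shows "\<exists>u. (\<Sum>j\<in>S. u j) = 0 \<and> (\<forall>i\<in>S. (\<Sum>j\<in>S. lam i j * u j) = z i)"
proof -
  let ?N = "card S" let ?M = "Mt S lam"
  have "?M \<in> Units (ring_mat TYPE(complex) ?N ())"
    by (rule det_non_zero_imp_unit[OF Mt_carrier Mt_det[OF fin ne alt nrm kc]])
  then obtain B where B: "B \<in> carrier_mat ?N ?N" "?M * B = 1\<^sub>m ?N"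
    unfolding Units_def ring_mat_def by auto
  define w where "w = vec ?N (\<lambda>a. z (sorted_list_of_set S ! a))"
  define x where "x = B *\<^sub>v w"
  have w: "w \<in> carrier_vec ?N" unfolding w_def by simp
  have x: "x \<in> carrier_vec ?N" unfolding x_def using B w by simp
  have Mx: "?M *\<^sub>v x = w" unfolding x_def
    using assoc_mult_mat_vec[OF Mt_carrier B(1) w, symmetric] B(2) w by simp
  have "\<forall>i\<in>S. (\<Sum>j\<in>S. lam i j * x $ (ix S j)) + (\<Sum>j\<in>S. x $ (ix S j)) = z i"
  proof
    fix i assume i: "i \<in> S"
    have a: "ix S i < card S" "sorted_list_of_set S ! (ix S i) = i" using nth_ix[OF fin i] by auto
    have e0: "(Mt S lam *\<^sub>v x) $ ix S i = w $ ix S i" using Mx by simp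
    also have "w $ ix S i = z i" unfolding w_def using a by simp
    finally have e1: "(Mt S lam *\<^sub>v x) $ ix S i = z i" .
    show "(\<Sum>j\<in>S. lam i j * x $ (ix S j)) + (\<Sum>j\<in>S. x $ (ix S j)) = z i"
      using Mt_expand[OF fin x i, of lam] e1 by metis
  qed
  from ker_plus[OF fin ne alt nrm this zs] show ?thesis by (rule exI[of _ "\<lambda>j. x $ (ix S j)"])
qed


lemma bires_exists:
  assumes fin: "finite S" and ne: "S \<noteq> {}" and alt: "add_alternating S lam"
    and nrm: "normalized S lam" and kc: "KC S lam"
  shows "\<exists>b. is_biresidue S lam b \<and> (\<forall>i j. i \<notin> S \<or> j \<notin> S \<longrightarrow> b i j = 0)"
proof -
  define N where "N = card S"
  have N0: "(of_nat N :: complex) \<noteq> 0" using fin ne unfolding N_def by simp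
  define e where "e (k::nat) (i::nat) = (if k = i then 1 else 0) - 1 / (of_nat N :: complex)" for k i
  have es: "(\<Sum>i\<in>S. e k i) = 0" if "k \<in> S" for k
  proof -
    have "(\<Sum>i\<in>S. e k i) = (\<Sum>i\<in>S. if k = i then 1 else 0) - of_nat N * (1 / of_nat N)"
      unfolding e_def N_def by (simp add: sum_subtractf)
    also have "\<dots> = 0" using that fin N0 by simp
    finally show ?thesis .
  qed
  have "\<forall>k. \<exists>u. k \<in> S \<longrightarrow> (\<Sum>j\<in>S. u j) = 0 \<and> (\<forall>i\<in>S. (\<Sum>j\<in>S. lam i j * u j) = e k i)"
    using surjS[OF fin ne alt nrm kc] es by blast
  then obtain U where U: "\<And>k. k \<in> S \<Longrightarrow> (\<Sum>j\<in>S. U k j) = 0 \<and> (\<forall>i\<in>S. (\<Sum>j\<in>S. lam i j * U k j) = e k i)"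
    by metis
  define b where "b j k = (if j \<in> S \<and> k \<in> S then U k j else 0)" for j k
  have out: "\<forall>i j. i \<notin> S \<or> j \<notin> S \<longrightarrow> b i j = 0" unfolding b_def by auto
  have bcol: "(\<Sum>j\<in>S. b j k) = 0" if "k \<in> S" for k
    using U[OF that] that unfolding b_def by simp
  have blam: "(\<Sum>j\<in>S. lam i j * b j k) = e k i" if "k \<in> S" "i \<in> S" for i k
  proof -
    have "(\<Sum>j\<in>S. lam i j * b j k) = (\<Sum>j\<in>S. lam i j * U k j)"
      unfolding b_def using that by (intro sum.cong) auto
    then show ?thesis using U that by simp
  qed
  have inv: "(\<Sum>j\<in>S. lam i j * (\<Sum>k\<in>S. b j k * z k)) = z i"
    if zs: "(\<Sum>i\<in>S. z i) = 0" and i: "i \<in> S" for z i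
  proof -
    have "(\<Sum>j\<in>S. lam i j * (\<Sum>k\<in>S. b j k * z k)) = (\<Sum>j\<in>S. \<Sum>k\<in>S. lam i j * b j k * z k)"
      by (simp add: sum_distrib_left mult.assoc)
    also have "\<dots> = (\<Sum>k\<in>S. \<Sum>j\<in>S. lam i j * b j k * z k)" by (rule sum.swap)
    also have "\<dots> = (\<Sum>k\<in>S. e k i * z k)"
      using blam i by (simp add: sum_distrib_right[symmetric])
    also have "\<dots> = (\<Sum>k\<in>S. (if k = i then z k else 0) - (1 / of_nat N) * z k)"
      unfolding e_def by (intro sum.cong) (auto simp: algebra_simps)
    also have "\<dots> = (\<Sum>k\<in>S. (if k = i then z k else 0)) - (1 / of_nat N) * (\<Sum>k\<in>S. z k)"
      by (simp add: sum_subtractf sum_distrib_left)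
    also have "\<dots> = z i" using i fin zs by simp
    finally show ?thesis .
  qed
  have brow: "(\<Sum>k\<in>S. b j k) = 0" if j: "j \<in> S" for j
  proof -
    define y where "y j = (\<Sum>k\<in>S. b j k)" for j
    have ky: "(\<Sum>j\<in>S. lam i j * y j) = 0" if "i \<in> S" for i
    proof -
      have "(\<Sum>j\<in>S. lam i j * y j) = (\<Sum>j\<in>S. \<Sum>k\<in>S. lam i j * b j k)"
        unfolding y_def by (simp add: sum_distrib_left)
      also have "\<dots> = (\<Sum>k\<in>S. \<Sum>j\<in>S. lam i j * b j k)" by (rule sum.swap)
      also have "\<dots> = (\<Sum>k\<in>S. e k i)" using blam that by simp
      also have "\<dots> = (\<Sum>k\<in>S. if k = i then 1 else 0) - of_nat N * (1 / of_nat N)"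
        unfolding e_def N_def by (simp add: sum_subtractf)
      also have "\<dots> = 0" using that fin N0 by simp
      finally show ?thesis .
    qed
    then have const: "\<forall>i\<in>S. \<forall>j\<in>S. y i = y j" using kc unfolding KC_def by blast
    have "(\<Sum>j\<in>S. y j) = (\<Sum>k\<in>S. \<Sum>j\<in>S. b j k)" unfolding y_def by (rule sum.swap)
    also have "\<dots> = 0" using bcol by simp
    finally have sy: "(\<Sum>j\<in>S. y j) = 0" .
    have "(\<Sum>i\<in>S. y i) = (\<Sum>i\<in>S. y j)"
    proof (rule sum.cong[OF refl])
      fix i assume "i \<in> S" then show "y i = y j" using const j by blast
    qed
    then have "of_nat N * y j = 0" using sy unfolding N_def by simp
    then show ?thesis using N0 unfolding y_def by simp
  qed
  have F: "b p q = (\<Sum>a\<in>S. \<Sum>c\<in>S. lam a c * b c p * b a q)" if "p \<in> S" "q \<in> S" for p q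
  proof -
    have "(\<Sum>a\<in>S. \<Sum>c\<in>S. lam a c * b c p * b a q) = (\<Sum>a\<in>S. (\<Sum>c\<in>S. lam a c * b c p) * b a q)"
      by (simp add: sum_distrib_right)
    also have "\<dots> = (\<Sum>a\<in>S. e p a * b a q)" using blam that by simp
    also have "\<dots> = (\<Sum>a\<in>S. (if a = p then b a q else 0) - (1 / of_nat N) * b a q)"
      unfolding e_def by (intro sum.cong) (auto simp: algebra_simps)
    also have "\<dots> = (\<Sum>a\<in>S. (if a = p then b a q else 0)) - (1 / of_nat N) * (\<Sum>a\<in>S. b a q)"
      by (simp add: sum_subtractf sum_distrib_left)
    also have "\<dots> = b p q" using that fin bcol by simp
    finally show ?thesis by simp
  qed
  have balt: "b q p = - b p q" if pq: "p \<in> S" "q \<in> S" for p q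
  proof -
    have "b p q = (\<Sum>a\<in>S. \<Sum>c\<in>S. lam a c * b c p * b a q)" by (rule F[OF pq])
    also have "\<dots> = (\<Sum>c\<in>S. \<Sum>a\<in>S. lam a c * b c p * b a q)" by (rule sum.swap)
    also have "\<dots> = (\<Sum>c\<in>S. \<Sum>a\<in>S. - (lam c a * b a q * b c p))"
    proof (intro sum.cong refl)
      fix a c assume "a \<in> S" "c \<in> S"
      then have "lam a c = - lam c a" using alt unfolding add_alternating_def by blast
      then show "lam a c * b c p * b a q = - (lam c a * b a q * b c p)" by simp
    qed
    also have "\<dots> = - (\<Sum>c\<in>S. \<Sum>a\<in>S. lam c a * b a q * b c p)" by (simp add: sum_negf)
    also have "\<dots> = - b q p" by (subst F[OF pq(2) pq(1)]) (rule refl)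
    finally show ?thesis by simp
  qed
  have "is_biresidue S lam b"
    unfolding is_biresidue_def add_alternating_def normalized_def
    using balt brow inv by blast
  then show ?thesis using out by blast
qed

lemma bires_unique:
  assumes fin: "finite S" and ne: "S \<noteq> {}" and alt: "add_alternating S lam"
    and nrm: "normalized S lam" and kc: "KC S lam"
    and b1: "is_biresidue S lam b1" "\<forall>i j. i \<notin> S \<or> j \<notin> S \<longrightarrow> b1 i j = 0"
    and b2: "is_biresidue S lam b2" "\<forall>i j. i \<notin> S \<or> j \<notin> S \<longrightarrow> b2 i j = 0"
  shows "b1 = b2"
proof -
  define D where "D j k = b1 j k - b2 j k" for j k
  have N0: "(of_nat (card S) :: complex) \<noteq> 0" using fin ne by simp
  have a1: "add_alternating S b1" "normalized S b1" using b1(1) unfolding is_biresidue_def by auto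
  have a2: "add_alternating S b2" "normalized S b2" using b2(1) unfolding is_biresidue_def by auto
  have Dcol: "(\<Sum>j\<in>S. D j k) = 0" if "k \<in> S" for k
    unfolding D_def using colsum[OF a1 that] colsum[OF a2 that] by (simp add: sum_subtractf)
  have Drow: "(\<Sum>k\<in>S. D j k) = 0" if "j \<in> S" for j
    unfolding D_def using a1(2) a2(2) that unfolding normalized_def by (simp add: sum_subtractf)
  have Dz: "(\<Sum>k\<in>S. D j k * z k) = 0" if zs: "(\<Sum>i\<in>S. z i) = 0" and j: "j \<in> S" for z j
  proof -
    define y where "y j = (\<Sum>k\<in>S. D j k * z k)" for j
    have ky: "(\<Sum>j\<in>S. lam i j * y j) = 0" if i: "i \<in> S" for i
    proof -
      have e1: "(\<Sum>j\<in>S. lam i j * (\<Sum>k\<in>S. b1 j k * z k)) = z i"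
        using b1(1) zs i unfolding is_biresidue_def by blast
      have e2: "(\<Sum>j\<in>S. lam i j * (\<Sum>k\<in>S. b2 j k * z k)) = z i"
        using b2(1) zs i unfolding is_biresidue_def by blast
      have "(\<Sum>j\<in>S. lam i j * y j) = (\<Sum>j\<in>S. lam i j * (\<Sum>k\<in>S. b1 j k * z k)) - (\<Sum>j\<in>S. lam i j * (\<Sum>k\<in>S. b2 j k * z k))"
        unfolding y_def D_def by (simp add: left_diff_distrib right_diff_distrib sum_subtractf)
      then show ?thesis using e1 e2 by simp
    qed
    then have const: "\<forall>i\<in>S. \<forall>j\<in>S. y i = y j" using kc unfolding KC_def by blast
    have "(\<Sum>j\<in>S. y j) = (\<Sum>k\<in>S. \<Sum>j\<in>S. D j k * z k)"
      unfolding y_def by (rule sum.swap)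
    also have "\<dots> = (\<Sum>k\<in>S. (\<Sum>j\<in>S. D j k) * z k)" by (simp add: sum_distrib_right)
    also have "\<dots> = 0" using Dcol by simp
    finally have sy: "(\<Sum>j\<in>S. y j) = 0" .
    have "(\<Sum>i\<in>S. y i) = (\<Sum>i\<in>S. y j)"
    proof (rule sum.cong[OF refl])
      fix i assume "i \<in> S" then show "y i = y j" using const j by blast
    qed
    then have "of_nat (card S) * y j = 0" using sy by simp
    then show ?thesis using N0 unfolding y_def by simp
  qed
  have Dpair: "D j k = D j l" if "j \<in> S" "k \<in> S" "l \<in> S" for j k l
  proof (cases "k = l")
    case False
    define z where "z x = (if x = k then 1 else if x = l then -1 else (0::complex))" for x
    have "(\<Sum>i\<in>S. z i) = (\<Sum>i\<in>S. (if i = k then 1 else 0) - (if i = l then 1 else 0))"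
      unfolding z_def using False by (intro sum.cong) auto
    also have "\<dots> = 0" using that fin by (simp add: sum_subtractf)
    finally have zs: "(\<Sum>i\<in>S. z i) = 0" .
    have "(\<Sum>x\<in>S. D j x * z x) = (\<Sum>x\<in>S. (if x = k then D j x else 0) - (if x = l then D j x else 0))"
      unfolding z_def using False by (intro sum.cong) auto
    also have "\<dots> = D j k - D j l" using that fin by (simp add: sum_subtractf)
    finally show ?thesis using Dz[OF zs that(1)] by simp
  qed simp
  have D0: "D j k = 0" if "j \<in> S" "k \<in> S" for j k
  proof -
    have "(\<Sum>l\<in>S. D j l) = (\<Sum>l\<in>S. D j k)"
    proof (rule sum.cong[OF refl])
      fix l assume "l \<in> S" then show "D j l = D j k" using Dpair[of j l k] that by blast
    qed
    then have "of_nat (card S) * D j k = 0" using Drow[OF that(1)] by simp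
    then show ?thesis using N0 by simp
  qed
  show ?thesis
  proof (intro ext)
    fix j k show "b1 j k = b2 j k"
    proof (cases "j \<in> S \<and> k \<in> S")
      case True then show ?thesis using D0 unfolding D_def by fastforce
    next
      case False then show ?thesis using b1(2) b2(2) by auto
    qed
  qed
qed

lemma bires_char:
  assumes fin: "finite S" and ne: "S \<noteq> {}" and alt: "add_alternating S lam"
    and nrm: "normalized S lam" and kc: "KC S lam"
    and b: "is_biresidue S lam b" "\<forall>i j. i \<notin> S \<or> j \<notin> S \<longrightarrow> b i j = 0"
  shows "biresidue S lam = b"
  unfolding biresidue_def
proof (rule the_equality)
  show "is_biresidue S lam b \<and> (\<forall>i j. i \<notin> S \<or> j \<notin> S \<longrightarrow> b i j = 0)" using b by blast
next
  fix b' assume "is_biresidue S lam b' \<and> (\<forall>i j. i \<notin> S \<or> j \<notin> S \<longrightarrow> b' i j = 0)"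
  then show "b' = b" using bires_unique[OF fin ne alt nrm kc _ _ b] by blast
qed

lemma bires_prop:
  assumes fin: "finite S" and ne: "S \<noteq> {}" and alt: "add_alternating S lam"
    and nrm: "normalized S lam" and kc: "KC S lam"
  shows "is_biresidue S lam (biresidue S lam) \<and> (\<forall>i j. i \<notin> S \<or> j \<notin> S \<longrightarrow> biresidue S lam i j = 0)"
proof -
  obtain b where b: "is_biresidue S lam b" "\<forall>i j. i \<notin> S \<or> j \<notin> S \<longrightarrow> b i j = 0"
    using bires_exists[OF assms] by blast
  then show ?thesis using bires_char[OF assms b] by simp
qed


lemma rank_sum_outer:
  fixes cc r :: "nat \<Rightarrow> nat \<Rightarrow> complex"
  assumes "finite F"
  shows "vec_space.rank n (mat n n (\<lambda>(i, l). \<Sum>j\<in>F. cc j i * r j l)) \<le> card F"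
  using assms
proof (induction F rule: finite_induct)
  case empty
  have "mat n n (\<lambda>(i, l). \<Sum>j\<in>{}. cc j i * r j l) = (0\<^sub>m n n :: complex mat)"
    by (rule eq_matI) auto
  show ?case unfolding \<open>mat n n (\<lambda>(i, l). \<Sum>j\<in>{}. cc j i * r j l) = 0\<^sub>m n n\<close> vec_space.rank_0I by simp
next
  case (insert x F)
  let ?A = "mat n n (\<lambda>(i, l). cc x i * r x l)"
  let ?B = "mat n n (\<lambda>(i, l). \<Sum>j\<in>F. cc j i * r j l)"
  have eq: "mat n n (\<lambda>(i, l). \<Sum>j\<in>insert x F. cc j i * r j l) = ?A + ?B"
    using insert by (intro eq_matI) auto
  have A: "?A \<in> carrier_mat n n" and B: "?B \<in> carrier_mat n n" by auto
  have "vec_space.rank n ?A \<le> 1"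
    by (rule vec_space.rank_le_1_product_entries[OF A, of "cc x" "r x"]) auto
  then show ?case using vec_space.rank_subadditive[OF A B] insert eq by simp
qed

lemma to_mat_lessThan: "to_mat {..<n} lam = mat n n (\<lambda>(a, c). lam a c)"
  unfolding to_mat_def by (intro eq_matI) (auto simp: lessThan_atLeast0)

lemma KC_from_rank:
  assumes alt: "add_alternating {..<n} lam" and nrm: "normalized {..<n} lam"
    and rk: "mrank {..<n} lam = n - 1"
  shows "KC {..<n} lam"
  unfolding KC_def
proof (intro allI impI ballI, rule ccontr)
  fix u p q
  assume ker: "\<forall>i\<in>{..<n}. (\<Sum>j\<in>{..<n}. lam i j * u j) = 0"
    and p: "p \<in> {..<n}" and q: "q \<in> {..<n}" and neq: "u p \<noteq> u q"
  have pq: "p \<noteq> q" using neq by auto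
  define J where "J = {..<n} - {p, q}"
  have finJ: "finite J" unfolding J_def by simp
  have cardJ: "card J = n - 2" unfolding J_def using p q pq by (simp add: card_Diff_subset)
  have split: "(\<Sum>j\<in>{..<n}. g j) = g p + g q + (\<Sum>j\<in>J. g j)" for g :: "nat \<Rightarrow> complex"
  proof -
    have U: "{..<n} = insert p (insert q J)" unfolding J_def using p q by auto
    have "p \<notin> insert q J" "q \<notin> J" unfolding J_def using pq by auto
    then show ?thesis unfolding U using finJ by (simp add: add.assoc)
  qed
  define d where "d = u p - u q"
  have d0: "d \<noteq> 0" unfolding d_def using neq by simp
  define \<alpha> where "\<alpha> j = (u q - u j) / d" for j
  define rr where "rr j l = (if l = j then 1 else 0) + \<alpha> j * (if l = p then 1 else 0)
      + (- \<alpha> j - 1) * (if l = q then 1 else 0)" for j l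
  have rowsum: "(\<Sum>j\<in>{..<n}. lam i j) = 0" if "i < n" for i
    using nrm that unfolding normalized_def by auto
  have keyp: "(\<Sum>j\<in>J. lam i j * \<alpha> j) = lam i p" if i: "i < n" for i
  proof -
    have "(\<Sum>j\<in>{..<n}. lam i j * (u q - u j)) = u q * (\<Sum>j\<in>{..<n}. lam i j) - (\<Sum>j\<in>{..<n}. lam i j * u j)"
      by (simp add: algebra_simps sum_subtractf sum_distrib_left)
    also have "\<dots> = 0" using rowsum[OF i] ker i by simp
    finally have "(\<Sum>j\<in>{..<n}. lam i j * (u q - u j)) = 0" .
    then have "lam i p * (u q - u p) + (\<Sum>j\<in>J. lam i j * (u q - u j)) = 0"
      using split[of "\<lambda>j. lam i j * (u q - u j)"] by simp
    then have "(\<Sum>j\<in>J. lam i j * (u q - u j)) = lam i p * d" unfolding d_def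
      by (simp add: algebra_simps)
    then have "(\<Sum>j\<in>J. lam i j * (u q - u j)) / d = lam i p" using d0 by simp
    moreover have "(\<Sum>j\<in>J. lam i j * \<alpha> j) = (\<Sum>j\<in>J. lam i j * (u q - u j)) / d"
      unfolding \<alpha>_def by (simp add: sum_divide_distrib)
    ultimately show ?thesis by simp
  qed
  have keyq: "(\<Sum>j\<in>J. lam i j * (- \<alpha> j - 1)) = lam i q" if i: "i < n" for i
  proof -
    have "(\<Sum>j\<in>J. lam i j * (- \<alpha> j - 1)) = - (\<Sum>j\<in>J. lam i j * \<alpha> j) - (\<Sum>j\<in>J. lam i j)"
      by (simp add: algebra_simps sum_subtractf sum_negf)
    also have "\<dots> = - lam i p - (\<Sum>j\<in>J. lam i j)" using keyp[OF i] by simp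
    also have "\<dots> = lam i q" using rowsum[OF i] split[of "\<lambda>j. lam i j"]
      by (simp add: algebra_simps) (metis add.commute add_diff_cancel_left' diff_0 diff_diff_eq)
    finally show ?thesis .
  qed
  have pJ: "p \<notin> J" "q \<notin> J" unfolding J_def by auto
  have Aeq: "to_mat {..<n} lam = mat n n (\<lambda>(i, l). \<Sum>j\<in>J. (\<lambda>j i. lam i j) j i * rr j l)"
    unfolding to_mat_lessThan
  proof (rule eq_matI)
    fix i l assume il: "i < dim_row (mat n n (\<lambda>(i, l). \<Sum>j\<in>J. (\<lambda>j i. lam i j) j i * rr j l))"
      "l < dim_col (mat n n (\<lambda>(i, l). \<Sum>j\<in>J. (\<lambda>j i. lam i j) j i * rr j l))"
    then have i: "i < n" and l: "l < n" by auto
    have "(\<Sum>j\<in>J. lam i j * rr j l) = lam i l"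
    proof (cases "l \<in> J")
      case True
      then have lpq: "l \<noteq> p" "l \<noteq> q" using pJ by auto
      have "(\<Sum>j\<in>J. lam i j * rr j l) = (\<Sum>j\<in>J. if j = l then lam i j else 0)"
        unfolding rr_def using lpq by (intro sum.cong) auto
      also have "\<dots> = lam i l" using True finJ by simp
      finally show ?thesis .
    next
      case False
      then have "l = p \<or> l = q" using l unfolding J_def by auto
      then show ?thesis
      proof
        assume lp: "l = p"
        have "(\<Sum>j\<in>J. lam i j * rr j l) = (\<Sum>j\<in>J. lam i j * \<alpha> j)"
          unfolding rr_def lp using pJ pq by (intro sum.cong) auto
        then show ?thesis using keyp[OF i] lp by simp
      next
        assume lq: "l = q"
        have "(\<Sum>j\<in>J. lam i j * rr j l) = (\<Sum>j\<in>J. lam i j * (- \<alpha> j - 1))"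
          unfolding rr_def lq using pJ pq by (intro sum.cong) auto
        then show ?thesis using keyq[OF i] lq by simp
      qed
    qed
    then show "mat n n (\<lambda>(a, c). lam a c) $$ (i, l) =
        mat n n (\<lambda>(i, l). \<Sum>j\<in>J. (\<lambda>j i. lam i j) j i * rr j l) $$ (i, l)"
      using i l by simp
  qed auto
  have "mrank {..<n} lam \<le> n - 2"
    unfolding mrank_def card_lessThan Aeq
    using rank_sum_outer[OF finJ, of n "\<lambda>j i. lam i j" rr] cardJ by simp
  moreover have "n \<ge> 2" using p q pq by auto
  ultimately show False using rk by simp
qed

lemma rank_sub:
  assumes fin: "finite S" and ne: "S \<noteq> {}" and alt: "add_alternating S lam"
    and nrm: "normalized S lam" and kc: "KC S lam"
  shows "mrank S lam = card S - 1"
proof -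
  let ?N = "card S" let ?s = "sorted_list_of_set S"
  let ?A = "to_mat S lam"
  let ?J = "mat ?N ?N (\<lambda>(a, c). (1::complex))"
  have A: "?A \<in> carrier_mat ?N ?N" unfolding to_mat_def by simp
  have J: "?J \<in> carrier_mat ?N ?N" by simp
  have MAJ: "Mt S lam = ?A + ?J" unfolding Mt_def to_mat_def by (intro eq_matI) auto
  have "vec_space.rank ?N (Mt S lam) = ?N"
    using vec_space.det_rank_iff[OF Mt_carrier] Mt_det[OF fin ne alt nrm kc] by simp
  moreover have "vec_space.rank ?N ?J \<le> 1"
    by (rule vec_space.rank_le_1_product_entries[OF J, of "\<lambda>_. 1" "\<lambda>_. 1"]) auto
  ultimately have ge: "?N \<le> vec_space.rank ?N ?A + 1"
    using vec_space.rank_subadditive[OF A J] MAJ by simp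
  define one where "one = vec ?N (\<lambda>_. 1::complex)"
  have one: "one \<in> carrier_vec ?N" unfolding one_def by simp
  have N0: "0 < ?N" using fin ne by (simp add: card_gt_0_iff)
  have one0: "one \<noteq> 0\<^sub>v ?N"
  proof
    assume "one = 0\<^sub>v ?N"
    then have "one $ 0 = 0\<^sub>v ?N $ 0" by simp
    then show False using N0 unfolding one_def by simp
  qed
  have Aone: "?A *\<^sub>v one = 0\<^sub>v ?N"
  proof (rule eq_vecI)
    fix a assume "a < dim_vec (0\<^sub>v ?N :: complex vec)"
    then have a: "a < ?N" by simp
    have "(?A *\<^sub>v one) $ a = (\<Sum>c<?N. lam (?s ! a) (?s ! c) * one $ c)"
      using mv_entry[OF a, of one "(\<lambda>(a, b). lam (?s ! a) (?s ! b))"] unfolding to_mat_def one_def by simp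
    also have "\<dots> = (\<Sum>c<?N. lam (?s ! a) (?s ! c))" unfolding one_def by simp
    also have "\<dots> = (\<Sum>j\<in>S. lam (?s ! a) j)" using sumS[OF fin, of "lam (?s ! a)"] by simp
    also have "\<dots> = 0" using nrm nthS[OF fin a] unfolding normalized_def by blast
    finally show "(?A *\<^sub>v one) $ a = 0\<^sub>v ?N $ a" using a by simp
  qed (simp add: to_mat_def)
  have "det ?A = 0" using det_0_iff_vec_prod_zero_field[OF A] one one0 Aone by blast
  then have "vec_space.rank ?N ?A < ?N" using vec_space.det_zero_low_rank[OF A] by blast
  then show ?thesis unfolding mrank_def using ge by simp
qed


lemma sm_eq: "smoothable S lam i j = smb S (biresidue S lam) i j"
  by (simp add: smoothable_def smb_def theta_def Let_def)

lemma ac_eq: "angle_colored S lam i j k \<longleftrightarrow> smb S (biresidue S lam) i j \<and> k \<in> S - {i, j} \<and>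
   (biresidue S lam j k + biresidue S lam k i) / biresidue S lam i j \<noteq> 0"
  unfolding angle_colored_def sm_eq theta_def Let_def by (rule refl)

lemma ad_eq: "angle_dark S lam i j k \<longleftrightarrow> smb S (biresidue S lam) i j \<and> k \<in> S - {i, j} \<and>
   (biresidue S lam j k + biresidue S lam k i) / biresidue S lam i j = 2"
  unfolding angle_dark_def sm_eq theta_def Let_def by (rule refl)

lemma al_eq: "angle_light S lam i j k \<longleftrightarrow> smb S (biresidue S lam) i j \<and> k \<in> S - {i, j} \<and>
   (biresidue S lam j k + biresidue S lam k i) / biresidue S lam i j = 1"
  unfolding angle_light_def sm_eq theta_def Let_def by (rule refl)

lemma theta_swap:
  fixes x :: "nat \<Rightarrow> nat \<Rightarrow> complex"
  assumes alt: "\<forall>a\<in>S. \<forall>c\<in>S. x c a = - x a c" and "i \<in> S" "j \<in> S" "k \<in> S"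
  shows "(x i k + x k j) / x j i = (x j k + x k i) / x i j"
proof -
  have e1: "x i k = - x k i" and e2: "x k j = - x j k" and e3: "x j i = - x i j"
    using alt assms(2-4) by blast+
  have n: "x i k + x k j = - (x j k + x k i)" unfolding e1 e2 by (simp add: algebra_simps)
  have "(x i k + x k j) / x j i = (- (x j k + x k i)) / (- x i j)" unfolding n e3 by (rule refl)
  also have "\<dots> = (x j k + x k i) / x i j" by (rule minus_divide_divide)
  finally show ?thesis .
qed

lemma smb_sym:
  assumes alt: "\<forall>a\<in>S. \<forall>c\<in>S. x c a = - x a c" and sm: "smb S x i j"
  shows "smb S x j i"
proof -
  have ij: "i \<in> S" "j \<in> S" "i \<noteq> j" "x i j \<noteq> 0" using sm unfolding smb_def by auto
  have "x j i = - x i j" using alt ij by blast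
  then have ji: "x j i \<noteq> 0" using ij by simp
  show ?thesis unfolding smb_def
  proof (intro conjI ballI)
    fix k assume k: "k \<in> S - {j, i}"
    then obtain q :: nat where "(x j k + x k i) / x i j = of_nat q" using sm unfolding smb_def by blast
    then show "\<exists>q::nat. (x i k + x k j) / x j i = of_nat q"
      using theta_swap[OF alt ij(1) ij(2), of k] k by auto
  qed (use ij ji in auto)
qed

lemma smb_restrict:
  assumes "I \<subseteq> S" "i \<in> I" "j \<in> I" "smb S x i j" "\<forall>a\<in>I. \<forall>c\<in>I. y a c = x a c"
  shows "smb I y i j"
proof -
  have e: "y i j = x i j" using assms(2,3,5) by blast
  show ?thesis unfolding smb_def
  proof (intro conjI ballI)
    fix k assume k: "k \<in> I - {i, j}"
    then have kS: "k \<in> S - {i, j}" using assms(1) by auto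
    have "y j k = x j k" "y k i = x k i" using assms(2,3,5) k by blast+
    then show "\<exists>q::nat. (y j k + y k i) / y i j = of_nat q"
      using assms(4) kS e unfolding smb_def by simp
  qed (use assms e in \<open>auto simp: smb_def\<close>)
qed

lemma theta_sum:
  fixes x :: "nat \<Rightarrow> nat \<Rightarrow> complex"
  assumes fin: "finite S" and alt: "add_alternating S x" and nrm: "normalized S x"
    and ij: "i \<in> S" "j \<in> S" "i \<noteq> j" "x i j \<noteq> 0"
  shows "(\<Sum>k\<in>S - {i, j}. (x j k + x k i) / x i j) = 2"
proof -
  have a1: "x j i = - x i j" "x j j = - x j j" "x i i = - x i i"
    using alt ij unfolding add_alternating_def by blast+
  then have a: "x j i = - x i j" "x j j = 0" "x i i = 0" by (simp_all add: equal_neg_zero)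
  have sub: "{i, j} \<subseteq> S" using ij by auto
  have s1: "(\<Sum>k\<in>S - {i, j}. x j k) = (\<Sum>k\<in>S. x j k) - (\<Sum>k\<in>{i, j}. x j k)"
    using sum_diff[OF fin sub] by simp
  have s2: "(\<Sum>k\<in>S - {i, j}. x k i) = (\<Sum>k\<in>S - {i, j}. - x i k)"
  proof (rule sum.cong[OF refl])
    fix k assume "k \<in> S - {i, j}" then show "x k i = - x i k" using alt ij unfolding add_alternating_def by blast
  qed
  have s3: "(\<Sum>k\<in>S - {i, j}. x i k) = (\<Sum>k\<in>S. x i k) - (\<Sum>k\<in>{i, j}. x i k)"
    using sum_diff[OF fin sub] by simp
  have n1: "(\<Sum>k\<in>S. x j k) = 0" "(\<Sum>k\<in>S. x i k) = 0" using nrm ij unfolding normalized_def by auto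
  have "(\<Sum>k\<in>S - {i, j}. x j k + x k i) = x i j + x i j"
    unfolding sum.distrib s1 s2 sum_negf s3 n1 using ij a by simp
  then have "(\<Sum>k\<in>S - {i, j}. (x j k + x k i) / x i j) = (x i j + x i j) / x i j"
    by (simp add: sum_divide_distrib[symmetric])
  then show ?thesis using ij by simp
qed

lemma double_sum_alt:
  fixes x :: "nat \<Rightarrow> nat \<Rightarrow> complex"
  assumes "finite I" "add_alternating I x"
  shows "(\<Sum>i\<in>I. \<Sum>j\<in>I. x i j) = 0"
proof -
  have "(\<Sum>i\<in>I. \<Sum>j\<in>I. x i j) = (\<Sum>j\<in>I. \<Sum>i\<in>I. x i j)" by (rule sum.swap)
  also have "\<dots> = (\<Sum>j\<in>I. \<Sum>i\<in>I. - x j i)"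
  proof (intro sum.cong refl)
    fix j i assume "j \<in> I" "i \<in> I"
    then show "x i j = - x j i" using assms(2) unfolding add_alternating_def by blast
  qed
  also have "\<dots> = - (\<Sum>j\<in>I. \<Sum>i\<in>I. x j i)" by (simp add: sum_negf)
  finally show ?thesis by simp
qed

lemma restrict_norm:
  fixes x :: "nat \<Rightarrow> nat \<Rightarrow> complex"
  assumes fin: "finite V" and IV: "I \<subseteq> V" and i0: "i0 \<in> I"
    and alt: "add_alternating V x" and nrm: "normalized V x"
    and const: "\<forall>k\<in>V - I. \<forall>i\<in>I. x k i = x k i0"
  shows "normalized I x"
proof -
  define c where "c = (\<Sum>k\<in>V - I. x k i0)"
  have finI: "finite I" using fin IV finite_subset by blast
  have rs: "(\<Sum>j\<in>I. x i j) = c" if i: "i \<in> I" for i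
  proof -
    have iV: "i \<in> V" using i IV by auto
    have "(\<Sum>j\<in>V. x i j) = (\<Sum>j\<in>V - I. x i j) + (\<Sum>j\<in>I. x i j)"
      using sum.subset_diff[OF IV fin] by simp
    moreover have "(\<Sum>j\<in>V. x i j) = 0" using nrm iV unfolding normalized_def by blast
    moreover have "(\<Sum>j\<in>V - I. x i j) = - c"
    proof -
      have "(\<Sum>j\<in>V - I. x i j) = (\<Sum>j\<in>V - I. - x j i0)"
      proof (rule sum.cong[OF refl])
        fix j assume j: "j \<in> V - I"
        have "x i j = - x j i" using alt iV j unfolding add_alternating_def by blast
        also have "x j i = x j i0" using const j i by blast
        finally show "x i j = - x j i0" .
      qed
      then show ?thesis unfolding c_def by (simp add: sum_negf)
    qed
    ultimately show ?thesis by (simp add: add_eq_0_iff2)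
  qed
  have altI: "add_alternating I x" using alt IV unfolding add_alternating_def by blast
  have "(\<Sum>i\<in>I. \<Sum>j\<in>I. x i j) = (\<Sum>i\<in>I. c)" using rs by simp
  then have "of_nat (card I) * c = 0" using double_sum_alt[OF finI altI] by simp
  moreover have "card I \<noteq> 0" using finI i0 by auto
  ultimately have "c = 0" by simp
  then show ?thesis unfolding normalized_def using rs by simp
qed

lemma const_cycle:
  assumes "\<forall>t<m. g (f t) = g (f (Suc t mod m))" "t < m"
  shows "g (f t) = g (f 0)"
  using assms(2)
proof (induction t)
  case 0 then show ?case by simp
next
  case (Suc t)
  then have tm: "t < m" by simp
  then have "g (f t) = g (f (Suc t mod m))" using assms(1) by blast
  moreover have "Suc t mod m = Suc t" using Suc.prems by simp
  moreover have "g (f t) = g (f 0)" using Suc.IH tm by blast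
  ultimately show ?case by simp
qed

lemma sum_restr:
  fixes h g :: "nat \<Rightarrow> complex"
  assumes "finite V" "I \<subseteq> V"
  shows "(\<Sum>j\<in>V. h j * (if j \<in> I then g j else 0)) = (\<Sum>j\<in>I. h j * g j)"
proof -
  have "(\<Sum>j\<in>V. h j * (if j \<in> I then g j else 0)) = (\<Sum>j\<in>V. if j \<in> I then h j * g j else 0)"
    by (intro sum.cong) auto
  also have "\<dots> = (\<Sum>j\<in>V \<inter> I. h j * g j)"
    by (rule sum.inter_restrict[OF assms(1), of "\<lambda>j. h j * g j" I, symmetric])
  also have "V \<inter> I = I" using assms(2) by auto
  finally show ?thesis .
qed

lemma sum_restr1:
  fixes g :: "nat \<Rightarrow> complex"
  assumes "finite V" "I \<subseteq> V"
  shows "(\<Sum>j\<in>V. (if j \<in> I then g j else 0)) = (\<Sum>j\<in>I. g j)"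
  using sum_restr[OF assms, of "\<lambda>_. 1" g] by simp

lemma mod_shift:
  assumes "st < m" "t < m"
  shows "(st + t) mod (m::nat) = (if st + t < m then st + t else st + t - m)"
proof (cases "st + t < m")
  case False
  then have "(st + t) mod m = (st + t - m) mod m" by (simp add: le_mod_geq)
  also have "\<dots> = st + t - m" using assms by simp
  finally show ?thesis using False by simp
qed simp

lemma subcycle:
  fixes f :: "nat \<Rightarrow> nat" and x :: "nat \<Rightarrow> nat \<Rightarrow> complex"
  assumes inj: "inj_on f {..<m}" and img: "f ` {..<m} \<subseteq> S"
    and edges: "\<forall>t<m. smb S x (f t) (f (Suc t mod m))"
    and alt: "\<forall>i\<in>S. \<forall>j\<in>S. x j i = - x i j"
    and st: "st < m" and L: "3 \<le> L" "L \<le> m"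
    and close: "smb S x (f ((st + (L - 1)) mod m)) (f st)"
    and k: "k \<in> S" and kn: "\<forall>t<L. k \<noteq> f ((st + t) mod m)"
  shows "x (f st) k + x k (f ((st + (L - 1)) mod m)) = 0"
proof -
  define g where "g t = f ((st + t) mod m)" for t
  have m0: "0 < m" using st by simp
  have injg: "inj_on g {..<L}"
  proof (rule inj_onI)
    fix t1 t2 assume t1: "t1 \<in> {..<L}" and t2: "t2 \<in> {..<L}" and e: "g t1 = g t2"
    have "(st + t1) mod m \<in> {..<m}" "(st + t2) mod m \<in> {..<m}" using m0 by auto
    then have "(st + t1) mod m = (st + t2) mod m" using inj e unfolding g_def inj_on_def by blast
    moreover have "t1 < m" "t2 < m" using t1 t2 L by auto
    ultimately show "t1 = t2" using mod_shift[OF st] by (auto split: if_splits)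
  qed
  have imgg: "g ` {..<L} \<subseteq> S" unfolding g_def using img m0 by auto
  have edg: "\<forall>t<L. smb S x (g t) (g (Suc t mod L))"
  proof (intro allI impI)
    fix t assume t: "t < L"
    show "smb S x (g t) (g (Suc t mod L))"
    proof (cases "Suc t < L")
      case True
      then have "Suc t mod L = Suc t" by simp
      moreover have "(st + Suc t) mod m = Suc ((st + t) mod m) mod m" by (simp add: mod_Suc_eq)
      moreover have "(st + t) mod m < m" using m0 by simp
      ultimately show ?thesis unfolding g_def using edges by simp
    next
      case False
      then have "t = L - 1" using t by simp
      moreover have "Suc (L - 1) mod L = 0" using L by simp
      ultimately show ?thesis unfolding g_def using close st by simp
    qed
  qed
  have kS: "k \<in> S - g ` {..<L}" using k kn unfolding g_def by auto
  have "x (g (Suc (L - 1) mod L)) k + x k (g (L - 1)) = 0"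
    by (rule cycle_A[OF L(1) injg imgg edg alt _ kS]) (use L in simp)
  moreover have "g (Suc (L - 1) mod L) = f st" using L st unfolding g_def by simp
  ultimately show ?thesis unfolding g_def by simp
qed


context
  fixes n :: nat and lam :: "nat \<Rightarrow> nat \<Rightarrow> complex" and cs :: "nat list"
  assumes a1: "add_alternating {..<n} lam"
    and a2: "normalized {..<n} lam"
    and a3: "mrank {..<n} lam = n - 1"
    and a4: "smooth_cycle {..<n} lam cs"
begin

abbreviation "bb \<equiv> biresidue {..<n} lam"

lemma c_basic: "distinct cs" "3 \<le> length cs" "set cs \<subseteq> {..<n}"
  "\<forall>t < length cs. smoothable {..<n} lam (cs ! t) (cs ! (Suc t mod length cs))"
  using a4 unfolding smooth_cycle_def by auto

lemma c_inj: "inj_on ((!) cs) {..<length cs}"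
  using c_basic(1) by (rule inj_on_nth) auto

lemma c_img: "(!) cs ` {..<length cs} = set cs"
  by (auto simp: set_conv_nth)

lemma c_m0: "0 < length cs" using c_basic(2) by linarith

lemma c_0I: "cs ! 0 \<in> set cs" using c_m0 by simp

lemma c_fin: "finite {..<n}" "{..<n} \<noteq> {}"
  using c_basic(3) c_0I by auto

lemma c_KC: "KC {..<n} lam" by (rule KC_from_rank[OF a1 a2 a3])

lemma c_bres: "is_biresidue {..<n} lam bb" "\<forall>i j. i \<notin> {..<n} \<or> j \<notin> {..<n} \<longrightarrow> bb i j = 0"
  using bires_prop[OF c_fin a1 a2 c_KC] by auto

lemma c_balt: "add_alternating {..<n} bb" "normalized {..<n} bb"
  using c_bres(1) unfolding is_biresidue_def by auto

lemma c_balt': "\<forall>i\<in>{..<n}. \<forall>j\<in>{..<n}. bb j i = - bb i j"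
  using c_balt(1) unfolding add_alternating_def by blast

lemma c_smV: "\<forall>t < length cs. smb {..<n} bb (cs ! t) (cs ! (Suc t mod length cs))"
  using c_basic(4) sm_eq by blast

lemma c_A: "t < length cs \<Longrightarrow> k \<in> {..<n} - set cs \<Longrightarrow>
    bb (cs ! (Suc t mod length cs)) k + bb k (cs ! t) = 0"
  by (rule cycle_A[OF c_basic(2) c_inj _ c_smV c_balt']) (use c_basic(3) c_img in auto)

lemma c_nu: "k \<in> {..<n} - set cs \<Longrightarrow> i \<in> set cs \<Longrightarrow> bb k i = bb k (cs ! 0)"
proof -
  assume k: "k \<in> {..<n} - set cs" and i: "i \<in> set cs"
  have step: "\<forall>t<length cs. bb k (cs ! t) = bb k (cs ! (Suc t mod length cs))"
  proof (intro allI impI)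
    fix t assume t: "t < length cs"
    have "cs ! (Suc t mod length cs) \<in> set cs" using c_m0 by simp
    then have "cs ! (Suc t mod length cs) \<in> {..<n}" using c_basic(3) by auto
    then have "bb (cs ! (Suc t mod length cs)) k = - bb k (cs ! (Suc t mod length cs))"
      using c_balt' k by blast
    then show "bb k (cs ! t) = bb k (cs ! (Suc t mod length cs))"
      using c_A[OF t k] by (simp add: add_eq_0_iff2 add.commute)
  qed
  obtain t where t: "t < length cs" "i = cs ! t" using i by (auto simp: in_set_conv_nth)
  show ?thesis using const_cycle[of "length cs" "bb k" "(!) cs", OF step t(1)] t by simp
qed

lemma c_bI: "normalized (set cs) bb" "add_alternating (set cs) bb"
proof -
  show "normalized (set cs) bb"
    by (rule restrict_norm[OF c_fin(1) c_basic(3) c_0I c_balt]) (use c_nu in blast)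
  show "add_alternating (set cs) bb" using c_balt(1) c_basic(3) unfolding add_alternating_def by blast
qed

lemma c_KCb: "KC (set cs) bb"
  unfolding KC_def
proof (intro allI impI ballI)
  fix y i j assume ker: "\<forall>i\<in>set cs. (\<Sum>j\<in>set cs. bb i j * y j) = 0" and i: "i \<in> set cs" and j: "j \<in> set cs"
  let ?I = "set cs" let ?V = "{..<n}"
  define \<mu> where "\<mu> = (\<Sum>j\<in>?I. y j) / of_nat (card ?I)"
  define Y where "Y j = (if j \<in> ?I then y j - \<mu> else 0)" for j
  have cI: "(of_nat (card ?I) :: complex) \<noteq> 0" using c_0I by auto
  have sY: "(\<Sum>j\<in>?V. Y j) = 0"
  proof -
    have "(\<Sum>j\<in>?V. Y j) = (\<Sum>j\<in>?I. y j - \<mu>)" unfolding Y_def by (rule sum_restr1[OF c_fin(1) c_basic(3)])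
    also have "\<dots> = (\<Sum>j\<in>?I. y j) - of_nat (card ?I) * \<mu>" by (simp add: sum_subtractf)
    also have "\<dots> = 0" unfolding \<mu>_def using cI by simp
    finally show ?thesis .
  qed
  have bY: "(\<Sum>k\<in>?V. bb a k * Y k) = 0" if a: "a \<in> ?V" for a
  proof -
    have "(\<Sum>k\<in>?V. bb a k * Y k) = (\<Sum>k\<in>?I. bb a k * (y k - \<mu>))"
      unfolding Y_def by (rule sum_restr[OF c_fin(1) c_basic(3)])
    also have "\<dots> = (\<Sum>k\<in>?I. bb a k * y k) - \<mu> * (\<Sum>k\<in>?I. bb a k)"
      by (simp add: algebra_simps sum_subtractf sum_distrib_left)
    also have "\<dots> = 0"
    proof (cases "a \<in> ?I")
      case True
      then show ?thesis using ker c_bI(1) unfolding normalized_def by simp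
    next
      case False
      then have aV: "a \<in> ?V - ?I" using a by auto
      have "(\<Sum>k\<in>?I. bb a k * (y k - \<mu>)) = (\<Sum>k\<in>?I. bb a (cs ! 0) * (y k - \<mu>))"
      proof (rule sum.cong[OF refl])
        fix k assume "k \<in> ?I" then show "bb a k * (y k - \<mu>) = bb a (cs ! 0) * (y k - \<mu>)"
          using c_nu[OF aV] by simp
      qed
      also have "\<dots> = bb a (cs ! 0) * (\<Sum>k\<in>?I. y k - \<mu>)" by (simp add: sum_distrib_left)
      also have "(\<Sum>k\<in>?I. y k - \<mu>) = 0"
        using sY unfolding Y_def sum_restr1[OF c_fin(1) c_basic(3)] .
      finally have "(\<Sum>k\<in>?I. bb a k * (y k - \<mu>)) = 0" by simp
      then show ?thesis by (simp add: algebra_simps sum_subtractf sum_distrib_left)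
    qed
    finally show ?thesis .
  qed
  have Y0: "Y x = 0" if x: "x \<in> ?V" for x
  proof -
    have "(\<Sum>j\<in>?V. lam x j * (\<Sum>k\<in>?V. bb j k * Y k)) = Y x"
      using c_bres(1) sY x unfolding is_biresidue_def by blast
    then show ?thesis using bY by simp
  qed
  have "y i = \<mu>" "y j = \<mu>" using Y0[of i] Y0[of j] i j c_basic(3) unfolding Y_def by auto
  then show "y i = y j" by simp
qed


lemma c_lamconst: "k \<in> {..<n} - set cs \<Longrightarrow> i \<in> set cs \<Longrightarrow> lam k i = lam k (cs ! 0)"
proof -
  assume k: "k \<in> {..<n} - set cs" and i: "i \<in> set cs"
  let ?I = "set cs" let ?V = "{..<n}" let ?i0 = "cs ! 0"
  show ?thesis
  proof (cases "i = ?i0")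
    case False
    define z where "z a = (if a = i then 1 else if a = ?i0 then -1 else (0::complex))" for a
    have zs: "(\<Sum>a\<in>?I. z a) = 0"
    proof -
      have "(\<Sum>a\<in>?I. z a) = (\<Sum>a\<in>?I. (if a = i then 1 else 0) - (if a = ?i0 then 1 else 0))"
        unfolding z_def using False by (intro sum.cong) auto
      also have "\<dots> = 0" using i c_0I by (simp add: sum_subtractf)
      finally show ?thesis .
    qed
    have finI: "finite ?I" by simp
    have neI: "?I \<noteq> {}" using c_0I by auto
    obtain y where y: "(\<Sum>j\<in>?I. y j) = 0" "\<forall>a\<in>?I. (\<Sum>c\<in>?I. bb a c * y c) = z a"
      using surjS[OF finI neI c_bI(2) c_bI(1) c_KCb zs] by blast
    define Y where "Y c = (if c \<in> ?I then y c else 0)" for c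
    have sY: "(\<Sum>c\<in>?V. Y c) = 0" unfolding Y_def sum_restr1[OF c_fin(1) c_basic(3)] by (rule y(1))
    have bY: "(\<Sum>c\<in>?V. bb a c * Y c) = z a" if a: "a \<in> ?V" for a
    proof -
      have "(\<Sum>c\<in>?V. bb a c * Y c) = (\<Sum>c\<in>?I. bb a c * y c)"
        unfolding Y_def by (rule sum_restr[OF c_fin(1) c_basic(3)])
      also have "\<dots> = z a"
      proof (cases "a \<in> ?I")
        case True then show ?thesis using y(2) by blast
      next
        case False
        then have aV: "a \<in> ?V - ?I" using a by auto
        have "(\<Sum>c\<in>?I. bb a c * y c) = (\<Sum>c\<in>?I. bb a ?i0 * y c)"
        proof (rule sum.cong[OF refl])
          fix c assume "c \<in> ?I" then show "bb a c * y c = bb a ?i0 * y c" using c_nu[OF aV] by simp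
        qed
        also have "\<dots> = 0" using y(1) by (simp add: sum_distrib_left[symmetric])
        finally show ?thesis using False i c_0I unfolding z_def by auto
      qed
      finally show ?thesis .
    qed
    have kV: "k \<in> ?V" using k by auto
    have "(\<Sum>a\<in>?V. lam k a * (\<Sum>c\<in>?V. bb a c * Y c)) = Y k"
      using c_bres(1) sY kV unfolding is_biresidue_def by blast
    then have e: "(\<Sum>a\<in>?V. lam k a * z a) = 0" using bY k unfolding Y_def by simp
    have iV: "i \<in> ?V" "?i0 \<in> ?V" using i c_0I c_basic(3) by auto
    have "(\<Sum>a\<in>?V. lam k a * z a) = (\<Sum>a\<in>?V. (if a = i then lam k a else 0) - (if a = ?i0 then lam k a else 0))"
      unfolding z_def using False by (intro sum.cong) auto
    also have "\<dots> = lam k i - lam k ?i0" using iV by (simp add: sum_subtractf)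
    finally show ?thesis using e by simp
  qed simp
qed

lemma c_claim3: "i1 \<in> set cs \<Longrightarrow> i2 \<in> set cs \<Longrightarrow> j \<in> {..<n} - set cs \<Longrightarrow> lam i1 j = lam i2 j"
proof -
  assume i1: "i1 \<in> set cs" and i2: "i2 \<in> set cs" and j: "j \<in> {..<n} - set cs"
  have V: "i1 \<in> {..<n}" "i2 \<in> {..<n}" "j \<in> {..<n}" using i1 i2 j c_basic(3) by auto
  have "lam i1 j = - lam j i1" "lam i2 j = - lam j i2" using a1 V unfolding add_alternating_def by blast+
  moreover have "lam j i1 = lam j i2" using c_lamconst[OF j i1] c_lamconst[OF j i2] by simp
  ultimately show ?thesis by simp
qed

lemma c_lamI: "normalized (set cs) lam" "add_alternating (set cs) lam"
proof -
  show "normalized (set cs) lam"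
    by (rule restrict_norm[OF c_fin(1) c_basic(3) c_0I a1 a2]) (use c_lamconst in blast)
  show "add_alternating (set cs) lam" using a1 c_basic(3) unfolding add_alternating_def by blast
qed

lemma c_KCl: "KC (set cs) lam"
  unfolding KC_def
proof (intro allI impI ballI)
  fix y i j assume ker: "\<forall>i\<in>set cs. (\<Sum>j\<in>set cs. lam i j * y j) = 0" and i: "i \<in> set cs" and j: "j \<in> set cs"
  let ?I = "set cs" let ?V = "{..<n}"
  define \<mu> where "\<mu> = (\<Sum>j\<in>?I. y j) / of_nat (card ?I)"
  define Y where "Y j = (if j \<in> ?I then y j - \<mu> else 0)" for j
  have cI: "(of_nat (card ?I) :: complex) \<noteq> 0" using c_0I by auto
  have sI: "(\<Sum>j\<in>?I. y j - \<mu>) = 0"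
  proof -
    have "(\<Sum>j\<in>?I. y j - \<mu>) = (\<Sum>j\<in>?I. y j) - of_nat (card ?I) * \<mu>" by (simp add: sum_subtractf)
    also have "\<dots> = 0" unfolding \<mu>_def using cI by simp
    finally show ?thesis .
  qed
  have lY: "(\<Sum>k\<in>?V. lam a k * Y k) = 0" if a: "a \<in> ?V" for a
  proof -
    have "(\<Sum>k\<in>?V. lam a k * Y k) = (\<Sum>k\<in>?I. lam a k * (y k - \<mu>))"
      unfolding Y_def by (rule sum_restr[OF c_fin(1) c_basic(3)])
    also have "\<dots> = 0"
    proof (cases "a \<in> ?I")
      case True
      have "(\<Sum>k\<in>?I. lam a k * (y k - \<mu>)) = (\<Sum>k\<in>?I. lam a k * y k) - \<mu> * (\<Sum>k\<in>?I. lam a k)"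
        by (simp add: algebra_simps sum_subtractf sum_distrib_left)
      then show ?thesis using ker c_lamI(1) True unfolding normalized_def by simp
    next
      case False
      then have aV: "a \<in> ?V - ?I" using a by auto
      have "(\<Sum>k\<in>?I. lam a k * (y k - \<mu>)) = (\<Sum>k\<in>?I. lam a (cs ! 0) * (y k - \<mu>))"
      proof (rule sum.cong[OF refl])
        fix k assume "k \<in> ?I" then show "lam a k * (y k - \<mu>) = lam a (cs ! 0) * (y k - \<mu>)"
          using c_lamconst[OF aV] by simp
      qed
      also have "\<dots> = lam a (cs ! 0) * (\<Sum>k\<in>?I. y k - \<mu>)" by (simp add: sum_distrib_left)
      finally show ?thesis using sI by simp
    qed
    finally show ?thesis .
  qed
  have const: "\<forall>a\<in>?V. \<forall>b\<in>?V. Y a = Y b" using c_KC lY unfolding KC_def by blast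
  have sY: "(\<Sum>j\<in>?V. Y j) = 0" unfolding Y_def sum_restr1[OF c_fin(1) c_basic(3)] by (rule sI)
  have i0V: "cs ! 0 \<in> ?V" using c_0I c_basic(3) by auto
  have "(\<Sum>j\<in>?V. Y j) = (\<Sum>j\<in>?V. Y (cs ! 0))"
  proof (rule sum.cong[OF refl])
    fix x assume "x \<in> ?V" then show "Y x = Y (cs ! 0)" using const i0V by blast
  qed
  then have "of_nat n * Y (cs ! 0) = 0" using sY by simp
  moreover have "n \<noteq> 0" using i0V by auto
  ultimately have Y00: "Y (cs ! 0) = 0" by simp
  have "Y i = 0" "Y j = 0" using const Y00 i0V i j c_basic(3) by (metis subsetD)+
  then have "y i = \<mu>" "y j = \<mu>" using i j unfolding Y_def by auto
  then show "y i = y j" by simp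
qed

lemma c_rank: "mrank (set cs) lam = card (set cs) - 1"
  by (rule rank_sub[OF _ _ c_lamI(2) c_lamI(1) c_KCl]) (use c_0I in auto)

definition bI where "bI i j = (if i \<in> set cs \<and> j \<in> set cs then bb i j else 0)"

lemma c_bIres: "biresidue (set cs) lam = bI"
proof (rule bires_char[OF _ _ c_lamI(2) c_lamI(1) c_KCl])
  show "finite (set cs)" by simp
  show "set cs \<noteq> {}" using c_0I by auto
  show "\<forall>i j. i \<notin> set cs \<or> j \<notin> set cs \<longrightarrow> bI i j = 0" unfolding bI_def by auto
  let ?I = "set cs" let ?V = "{..<n}"
  have eqI: "\<forall>a\<in>?I. \<forall>c\<in>?I. bI a c = bb a c" unfolding bI_def by simp
  show "is_biresidue (set cs) lam bI"
    unfolding is_biresidue_def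
  proof (intro conjI allI impI ballI)
    show "add_alternating (set cs) bI" unfolding add_alternating_def
    proof (intro ballI)
      fix a c assume "a \<in> ?I" "c \<in> ?I"
      then have "bI c a = bb c a" "bI a c = bb a c" "bb c a = - bb a c"
        using eqI c_bI(2) unfolding add_alternating_def by blast+
      then show "bI c a = - bI a c" by simp
    qed
    show "normalized (set cs) bI" unfolding normalized_def
    proof
      fix a assume a: "a \<in> ?I"
      have "(\<Sum>c\<in>?I. bI a c) = (\<Sum>c\<in>?I. bb a c)" using a unfolding bI_def by simp
      then show "(\<Sum>c\<in>?I. bI a c) = 0" using c_bI(1) a unfolding normalized_def by simp
    qed
  next
    fix z :: "nat \<Rightarrow> complex" and i :: nat
    assume zs: "(\<Sum>i\<in>?I. z i) = 0" and i: "i \<in> ?I"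
    define Z where "Z c = (if c \<in> ?I then z c else 0)" for c
    have sZ: "(\<Sum>c\<in>?V. Z c) = 0" unfolding Z_def sum_restr1[OF c_fin(1) c_basic(3)] by (rule zs)
    have iV: "i \<in> ?V" using i c_basic(3) by auto
    have w: "(\<Sum>k\<in>?V. bb j k * Z k) = (if j \<in> ?I then (\<Sum>k\<in>?I. bI j k * z k) else 0)" if j: "j \<in> ?V" for j
    proof -
      have "(\<Sum>k\<in>?V. bb j k * Z k) = (\<Sum>k\<in>?I. bb j k * z k)"
        unfolding Z_def by (rule sum_restr[OF c_fin(1) c_basic(3)])
      also have "\<dots> = (if j \<in> ?I then (\<Sum>k\<in>?I. bI j k * z k) else 0)"
      proof (cases "j \<in> ?I")
        case True then show ?thesis unfolding bI_def by simp
      next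
        case False
        then have jV: "j \<in> ?V - ?I" using j by auto
        have "(\<Sum>k\<in>?I. bb j k * z k) = (\<Sum>k\<in>?I. bb j (cs ! 0) * z k)"
        proof (rule sum.cong[OF refl])
          fix k assume "k \<in> ?I" then show "bb j k * z k = bb j (cs ! 0) * z k" using c_nu[OF jV] by simp
        qed
        also have "\<dots> = 0" using zs by (simp add: sum_distrib_left[symmetric])
        finally show ?thesis using False by simp
      qed
      finally show ?thesis .
    qed
    have "(\<Sum>j\<in>?V. lam i j * (\<Sum>k\<in>?V. bb j k * Z k)) = Z i"
      using c_bres(1) sZ iV unfolding is_biresidue_def by blast
    then have "(\<Sum>j\<in>?V. lam i j * (if j \<in> ?I then (\<Sum>k\<in>?I. bI j k * z k) else 0)) = z i"
      using w i unfolding Z_def by simp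
    then show "(\<Sum>j\<in>?I. lam i j * (\<Sum>k\<in>?I. bI j k * z k)) = z i"
      unfolding sum_restr[OF c_fin(1) c_basic(3)] .
  qed
qed


lemma c_smI: "smoothable (set cs) lam i j \<longleftrightarrow> smb (set cs) bI i j"
  using sm_eq c_bIres by simp

lemma c_bIalt: "\<forall>a\<in>set cs. \<forall>c\<in>set cs. bI c a = - bI a c"
proof (intro ballI)
  fix a c assume "a \<in> set cs" "c \<in> set cs"
  then have "bI c a = bb c a" "bI a c = bb a c" unfolding bI_def by simp_all
  moreover have "bb c a = - bb a c" using c_bI(2) \<open>a \<in> set cs\<close> \<open>c \<in> set cs\<close>
    unfolding add_alternating_def by blast
  ultimately show "bI c a = - bI a c" by simp
qed

lemma c_bIalt2: "add_alternating (set cs) bI" "normalized (set cs) bI"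
proof -
  have ne: "set cs \<noteq> {}" using c_0I by auto
  have "is_biresidue (set cs) lam (biresidue (set cs) lam)"
    using bires_prop[OF _ ne c_lamI(2) c_lamI(1) c_KCl] by simp
  then have "is_biresidue (set cs) lam bI" unfolding c_bIres .
  then show "add_alternating (set cs) bI" "normalized (set cs) bI" unfolding is_biresidue_def by auto
qed

lemma c_eqI: "a \<in> set cs \<Longrightarrow> c \<in> set cs \<Longrightarrow> bI a c = bb a c"
  unfolding bI_def by simp

lemma c_smIedges: "\<forall>t < length cs. smb (set cs) bI (cs ! t) (cs ! (Suc t mod length cs))"
proof (intro allI impI)
  fix t assume t: "t < length cs"
  have s: "Suc t mod length cs < length cs" using c_m0 by simp
  show "smb (set cs) bI (cs ! t) (cs ! (Suc t mod length cs))"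
    by (rule smb_restrict[OF c_basic(3)]) (use t s c_smV c_eqI in auto)
qed

lemma c_edge_facts:
  assumes "cycle_edge cs i j"
  shows "i \<in> set cs" "j \<in> set cs" "smb {..<n} bb i j" "smb (set cs) bI i j"
    "\<forall>k\<in>{..<n} - set cs. bb j k + bb k i = 0"
proof -
  obtain t where t: "t < length cs" "{i, j} = {cs ! t, cs ! ((t + 1) mod length cs)}"
    using assms unfolding cycle_edge_def by blast
  let ?a = "cs ! t" let ?b = "cs ! (Suc t mod length cs)"
  have s: "Suc t mod length cs < length cs" using c_m0 by simp
  have ab: "?a \<in> set cs" "?b \<in> set cs" using t s by auto
  have sm1: "smb {..<n} bb ?a ?b" using c_smV t by blast
  have sm2: "smb (set cs) bI ?a ?b" using c_smIedges t by blast
  have A: "\<forall>k\<in>{..<n} - set cs. bb ?b k + bb k ?a = 0" using c_A t by blast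
  have or: "(i = ?a \<and> j = ?b) \<or> (i = ?b \<and> j = ?a)" using t(2) by (auto simp: doubleton_eq_iff)
  show "i \<in> set cs" "j \<in> set cs" using or ab by auto
  show "smb {..<n} bb i j" using or sm1 smb_sym[OF c_balt' sm1] by auto
  show "smb (set cs) bI i j" using or sm2 smb_sym[OF c_bIalt sm2] by auto
  show "\<forall>k\<in>{..<n} - set cs. bb j k + bb k i = 0"
  proof
    fix k assume k: "k \<in> {..<n} - set cs"
    have V: "?a \<in> {..<n}" "?b \<in> {..<n}" "k \<in> {..<n}" using ab k c_basic(3) by auto
    have e1: "bb ?a k = - bb k ?a" "bb k ?b = - bb ?b k" using c_balt' V by blast+
    have e2: "bb ?b k + bb k ?a = 0" using A k by blast
    from or show "bb j k + bb k i = 0"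
    proof
      assume "i = ?a \<and> j = ?b" then show ?thesis using e2 by simp
    next
      assume ij: "i = ?b \<and> j = ?a"
      have "bb ?a k + bb k ?b = - (bb ?b k + bb k ?a)" unfolding e1 by simp
      then show ?thesis using ij e2 by simp
    qed
  qed
qed

lemma c_claim1a:
  assumes "i \<in> set cs" "j \<in> set cs" "angle_colored {..<n} lam i j k"
  shows "k \<in> set cs"
proof (rule ccontr)
  assume kI: "k \<notin> set cs"
  have ac: "smb {..<n} bb i j" "k \<in> {..<n} - {i, j}" "(bb j k + bb k i) / bb i j \<noteq> 0"
    using assms(3) unfolding ac_eq by auto
  have kV: "k \<in> {..<n} - set cs" using ac(2) kI by auto
  have jV: "j \<in> {..<n}" using assms(2) c_basic(3) by auto
  have "bb j k = - bb k j" using c_balt' jV kV by blast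
  moreover have "bb k j = bb k (cs ! 0)" "bb k i = bb k (cs ! 0)" using c_nu[OF kV] assms(1,2) by auto
  ultimately have "bb j k + bb k i = 0" by simp
  then show False using ac(3) by simp
qed

lemma c_claim1b:
  assumes "i \<notin> set cs" "j \<notin> set cs" "angle_colored {..<n} lam i j k"
  shows "k \<notin> set cs"
proof
  assume kI: "k \<in> set cs"
  let ?V = "{..<n}" let ?I = "set cs" let ?i0 = "cs ! 0"
  have ac: "smb ?V bb i j" "k \<in> ?V - {i, j}" "(bb j k + bb k i) / bb i j \<noteq> 0"
    using assms(3) unfolding ac_eq by auto
  have ij: "i \<in> ?V" "j \<in> ?V" "i \<noteq> j" "bb i j \<noteq> 0" using ac(1) unfolding smb_def by auto
  have iV: "i \<in> ?V - ?I" "j \<in> ?V - ?I" using ij assms by auto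
  define th where "th k' = (bb j k' + bb k' i) / bb i j" for k'
  have thc: "th k' = th ?i0" if k': "k' \<in> ?I" for k'
  proof -
    have k'V: "k' \<in> ?V" "?i0 \<in> ?V" using k' c_0I c_basic(3) by auto
    have "bb k' i = - bb i k'" "bb ?i0 i = - bb i ?i0" using c_balt' k'V ij by blast+
    moreover have "bb i k' = bb i ?i0" "bb j k' = bb j ?i0" using c_nu[OF iV(1) k'] c_nu[OF iV(2) k'] by auto
    ultimately show ?thesis unfolding th_def by simp
  qed
  have "\<forall>k'. \<exists>q::nat. k' \<in> ?V - {i, j} \<longrightarrow> th k' = of_nat q"
    using ac(1) unfolding smb_def th_def by blast
  then obtain Q :: "nat \<Rightarrow> nat" where Q: "\<And>k'. k' \<in> ?V - {i, j} \<Longrightarrow> th k' = of_nat (Q k')" by metis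
  have ts: "(\<Sum>k'\<in>?V - {i, j}. th k') = 2"
    unfolding th_def by (rule theta_sum[OF c_fin(1) c_balt ij])
  have "(\<Sum>k'\<in>?V - {i, j}. th k') = (\<Sum>k'\<in>?V - {i, j}. of_nat (Q k'))"
    by (rule sum.cong[OF refl]) (rule Q)
  also have "\<dots> = of_nat (\<Sum>k'\<in>?V - {i, j}. Q k')" by (rule of_nat_sum[symmetric])
  finally have h: "(of_nat (\<Sum>k'\<in>?V - {i, j}. Q k') :: complex) = of_nat 2" using ts by simp
  have sQ: "(\<Sum>k'\<in>?V - {i, j}. Q k') = 2" using h by (simp only: of_nat_eq_iff)
  have IV: "?I \<subseteq> ?V - {i, j}" using c_basic(3) assms(1,2) by auto
  have le: "(\<Sum>k'\<in>?I. Q k') \<le> 2" using sum_mono2[OF _ IV, of Q] sQ by simp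
  have q0: "Q k' = Q k" if "k' \<in> ?I" for k'
  proof -
    have a: "th k' = of_nat (Q k')" using Q IV that by blast
    have b: "th k = of_nat (Q k)" using Q IV kI by blast
    have "th k' = th k" using thc[OF that] thc[OF kI] by simp
    then have "(of_nat (Q k') :: complex) = of_nat (Q k)" using a b by simp
    then show ?thesis by (simp only: of_nat_eq_iff)
  qed
  have Qk: "Q k \<ge> 1"
  proof -
    have "th k \<noteq> 0" using ac(3) unfolding th_def .
    then have "Q k \<noteq> 0" using Q[OF ac(2)] by auto
    then show ?thesis by simp
  qed
  have "(\<Sum>k'\<in>?I. Q k') = (\<Sum>k'\<in>?I. Q k)" by (rule sum.cong[OF refl]) (rule q0)
  also have "\<dots> = card ?I * Q k" by simp
  finally have e: "(\<Sum>k'\<in>?I. Q k') = card ?I * Q k" .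
  have c3: "card ?I \<ge> 3" using c_basic(1,2) distinct_card by metis
  have "3 * 1 \<le> card ?I * Q k" by (rule mult_le_mono[OF c3 Qk])
  then have "(\<Sum>k'\<in>?I. Q k') \<ge> 3" using e by simp
  then show False using le by simp
qed



lemma c_chord:
  assumes ac: "a < c" "c < length cs" and sm: "smb (set cs) bI (cs ! a) (cs ! c)"
    and ne: "\<not> cycle_edge cs (cs ! a) (cs ! c)"
  shows False
proof -
  let ?m = "length cs" let ?I = "set cs" let ?i = "cs ! a" let ?j = "cs ! c"
  have am: "a < ?m" using ac by simp
  have nadj: "c \<noteq> Suc a"
  proof
    assume "c = Suc a"
    then have "cycle_edge cs ?i ?j" unfolding cycle_edge_def using ac
      by (intro exI[of _ a]) auto
    then show False using ne by simp
  qed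
  have nwrap: "\<not> (a = 0 \<and> c = ?m - 1)"
  proof
    assume h: "a = 0 \<and> c = ?m - 1"
    then have "c + 1 = ?m" using ac by simp
    then have "(c + 1) mod ?m = 0" by simp
    then have "cycle_edge cs ?i ?j" unfolding cycle_edge_def using ac h
      by (intro exI[of _ c]) (auto simp: insert_commute)
    then show False using ne by simp
  qed
  have imgI: "(!) cs ` {..<?m} \<subseteq> ?I" using c_img by simp
  have ij: "?i \<in> ?I" "?j \<in> ?I" "?i \<noteq> ?j" "bI ?i ?j \<noteq> 0" using sm unfolding smb_def by auto
  define L1 where "L1 = c - a + 1"
  define L2 where "L2 = ?m - c + a + 1"
  have L1: "3 \<le> L1" "L1 \<le> ?m" unfolding L1_def using ac nadj by auto
  have L2: "3 \<le> L2" "L2 \<le> ?m" unfolding L2_def using ac nwrap by auto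
  have e1: "(a + (L1 - 1)) mod ?m = c" unfolding L1_def using ac by simp
  have e2: "(c + (L2 - 1)) mod ?m = a" unfolding L2_def using ac
  proof -
    have "c + (?m - c + a + 1 - 1) = ?m + a" using ac by simp
    then show "(c + (?m - c + a + 1 - 1)) mod ?m = a" using am by simp
  qed
  have close1: "smb ?I bI (cs ! ((a + (L1 - 1)) mod ?m)) (cs ! a)"
    unfolding e1 by (rule smb_sym[OF c_bIalt sm])
  have close2: "smb ?I bI (cs ! ((c + (L2 - 1)) mod ?m)) (cs ! c)"
    unfolding e2 by (rule sm)
  have zero: "bI ?j k + bI k ?i = 0" if k: "k \<in> ?I - {?i, ?j}" for k
  proof -
    obtain x where x: "x < ?m" "k = cs ! x" using k by (auto simp: in_set_conv_nth)
    have xa: "x \<noteq> a" "x \<noteq> c" using k x by auto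
    show ?thesis
    proof (cases "a < x \<and> x < c")
      case True
      have kn: "\<forall>t<L2. k \<noteq> cs ! ((c + t) mod ?m)"
      proof (intro allI impI notI)
        fix t assume t: "t < L2" and eq: "k = cs ! ((c + t) mod ?m)"
        have tm: "t < ?m" using t L2 by simp
        have "(c + t) mod ?m < ?m" using c_m0 by simp
        then have "(c + t) mod ?m = x" using c_inj x eq unfolding inj_on_def by auto
        then show False using mod_shift[OF ac(2) tm] True t ac unfolding L2_def by (auto split: if_splits)
      qed
      have kI: "k \<in> ?I" using k by simp
      show ?thesis using subcycle[OF c_inj imgI c_smIedges c_bIalt ac(2) L2 close2 kI kn] e2 by simp
    next
      case False
      have kn: "\<forall>t<L1. k \<noteq> cs ! ((a + t) mod ?m)"
      proof (intro allI impI notI)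
        fix t assume t: "t < L1" and eq: "k = cs ! ((a + t) mod ?m)"
        have at: "a + t < ?m" using t ac unfolding L1_def by simp
        then have "(a + t) mod ?m = a + t" by simp
        then have "a + t = x" using c_inj x eq at unfolding inj_on_def by auto
        then show False using False xa t unfolding L1_def by auto
      qed
      have kI: "k \<in> ?I" using k by simp
      have r: "bI ?i k + bI k ?j = 0"
        using subcycle[OF c_inj imgI c_smIedges c_bIalt am L1 close1 kI kn] e1 by simp
      have "bI ?j k = - bI k ?j" "bI k ?i = - bI ?i k" using c_bIalt kI ij by blast+
      then show ?thesis using r by (simp add: add_eq_0_iff2 add.commute)
    qed
  qed
  have "(\<Sum>k\<in>?I - {?i, ?j}. (bI ?j k + bI k ?i) / bI ?i ?j) = 2"
    by (rule theta_sum[OF _ c_bIalt2 ij]) simp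
  moreover have "(\<Sum>k\<in>?I - {?i, ?j}. (bI ?j k + bI k ?i) / bI ?i ?j) = 0"
    by (rule sum.neutral) (use zero in simp)
  ultimately show False by simp
qed

lemma c_cycle_edge_sym: "cycle_edge cs i j \<longleftrightarrow> cycle_edge cs j i"
  unfolding cycle_edge_def by (simp add: insert_commute)

lemma c_sm: "smoothable (set cs) lam i j \<longleftrightarrow> cycle_edge cs i j"
proof
  assume "cycle_edge cs i j"
  then show "smoothable (set cs) lam i j" using c_edge_facts(4) c_smI by blast
next
  assume "smoothable (set cs) lam i j"
  then have sm: "smb (set cs) bI i j" using c_smI by blast
  show "cycle_edge cs i j"
  proof (rule ccontr)
    assume ne: "\<not> cycle_edge cs i j"
    have ij: "i \<in> set cs" "j \<in> set cs" "i \<noteq> j" using sm unfolding smb_def by auto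
    obtain a where a: "a < length cs" "i = cs ! a" using ij(1) by (auto simp: in_set_conv_nth)
    obtain c where c: "c < length cs" "j = cs ! c" using ij(2) by (auto simp: in_set_conv_nth)
    have "a \<noteq> c" using a c ij by auto
    then show False
    proof (cases "a < c")
      case True
      show False by (rule c_chord[OF True c(1)]) (use sm ne a c in auto)
    next
      case False
      then have ca: "c < a" using \<open>a \<noteq> c\<close> by simp
      have sm': "smb (set cs) bI j i" by (rule smb_sym[OF c_bIalt sm])
      have ne': "\<not> cycle_edge cs j i" using ne c_cycle_edge_sym by blast
      show False by (rule c_chord[OF ca a(1)]) (use sm' ne' a c in auto)
    qed
  qed
qed

lemma c_ang_gen:
  assumes ce: "cycle_edge cs i j" and P0: "\<not> P 0"
  shows "(smb (set cs) bI i j \<and> k \<in> set cs - {i, j} \<and> P ((bI j k + bI k i) / bI i j)) \<longleftrightarrow>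
         (smb {..<n} bb i j \<and> k \<in> {..<n} - {i, j} \<and> P ((bb j k + bb k i) / bb i j))"
proof -
  have f: "i \<in> set cs" "j \<in> set cs" "smb {..<n} bb i j" "smb (set cs) bI i j"
    "\<forall>k\<in>{..<n} - set cs. bb j k + bb k i = 0" using c_edge_facts[OF ce] by auto
  show ?thesis
  proof (cases "k \<in> set cs")
    case True
    have "bI j k = bb j k" "bI k i = bb k i" "bI i j = bb i j" using c_eqI f True by auto
    moreover have "k \<in> {..<n}" using True c_basic(3) by auto
    ultimately show ?thesis using f True by auto
  next
    case False
    have "\<not> (k \<in> {..<n} - {i, j} \<and> P ((bb j k + bb k i) / bb i j))"
    proof
      assume h: "k \<in> {..<n} - {i, j} \<and> P ((bb j k + bb k i) / bb i j)"
      then have "bb j k + bb k i = 0" using f(5) False by blast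
      then show False using h P0 by simp
    qed
    then show ?thesis using False by blast
  qed
qed

lemma c_angles:
  assumes ce: "cycle_edge cs i j"
  shows "(angle_colored (set cs) lam i j k \<longleftrightarrow> angle_colored {..<n} lam i j k)
       \<and> (angle_dark (set cs) lam i j k \<longleftrightarrow> angle_dark {..<n} lam i j k)
       \<and> (angle_light (set cs) lam i j k \<longleftrightarrow> angle_light {..<n} lam i j k)"
proof (intro conjI)
  show "angle_colored (set cs) lam i j k \<longleftrightarrow> angle_colored {..<n} lam i j k"
    unfolding ac_eq c_bIres using c_ang_gen[OF ce, of "\<lambda>x. x \<noteq> 0" k] by simp
  show "angle_dark (set cs) lam i j k \<longleftrightarrow> angle_dark {..<n} lam i j k"
    unfolding ad_eq c_bIres using c_ang_gen[OF ce, of "\<lambda>x. x = 2" k] by simp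
  show "angle_light (set cs) lam i j k \<longleftrightarrow> angle_light {..<n} lam i j k"
    unfolding al_eq c_bIres using c_ang_gen[OF ce, of "\<lambda>x. x = 1" k] by simp
qed

end

theorem lemma5p12:
  fixes n :: nat and lam :: "nat \<Rightarrow> nat \<Rightarrow> complex" and cs :: "nat list"
  assumes "add_alternating {..<n} lam"
    and "normalized {..<n} lam"
    and "mrank {..<n} lam = n - 1"
    and "smooth_cycle {..<n} lam cs"
  shows "(\<forall>i j k. smoothable {..<n} lam i j \<and> i \<in> set cs \<and> j \<in> set cs
              \<and> angle_colored {..<n} lam i j k \<longrightarrow> k \<in> set cs)
       \<and> (\<forall>i j k. smoothable {..<n} lam i j \<and> i \<notin> set cs \<and> j \<notin> set cs
              \<and> angle_colored {..<n} lam i j k \<longrightarrow> k \<notin> set cs)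
       \<and> normalized (set cs) lam
       \<and> mrank (set cs) lam = card (set cs) - 1
       \<and> (\<forall>i j. smoothable (set cs) lam i j \<longleftrightarrow> cycle_edge cs i j)
       \<and> (\<forall>i j k. cycle_edge cs i j \<longrightarrow>
              (angle_colored (set cs) lam i j k \<longleftrightarrow> angle_colored {..<n} lam i j k)
            \<and> (angle_dark (set cs) lam i j k \<longleftrightarrow> angle_dark {..<n} lam i j k)
            \<and> (angle_light (set cs) lam i j k \<longleftrightarrow> angle_light {..<n} lam i j k))
       \<and> (\<forall>i1\<in>set cs. \<forall>i2\<in>set cs. \<forall>j\<in>{..<n} - set cs. lam i1 j = lam i2 j)"
proof -
  have h1: "\<forall>i j k. smoothable {..<n} lam i j \<and> i \<in> set cs \<and> j \<in> set cs
              \<and> angle_colored {..<n} lam i j k \<longrightarrow> k \<in> set cs"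
    using c_claim1a[OF assms] by blast
  have h2: "\<forall>i j k. smoothable {..<n} lam i j \<and> i \<notin> set cs \<and> j \<notin> set cs
              \<and> angle_colored {..<n} lam i j k \<longrightarrow> k \<notin> set cs"
    using c_claim1b[OF assms] by blast
  have h3: "normalized (set cs) lam" by (rule c_lamI(1)[OF assms])
  have h4: "mrank (set cs) lam = card (set cs) - 1" by (rule c_rank[OF assms])
  have h5: "\<forall>i j. smoothable (set cs) lam i j \<longleftrightarrow> cycle_edge cs i j" using c_sm[OF assms] by blast
  have h6: "\<forall>i j k. cycle_edge cs i j \<longrightarrow>
              (angle_colored (set cs) lam i j k \<longleftrightarrow> angle_colored {..<n} lam i j k)
            \<and> (angle_dark (set cs) lam i j k \<longleftrightarrow> angle_dark {..<n} lam i j k)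
            \<and> (angle_light (set cs) lam i j k \<longleftrightarrow> angle_light {..<n} lam i j k)"
    using c_angles[OF assms] by blast
  have h7: "\<forall>i1\<in>set cs. \<forall>i2\<in>set cs. \<forall>j\<in>{..<n} - set cs. lam i1 j = lam i2 j"
    using c_claim3[OF assms] by blast
  show ?thesis by (intro conjI; (rule h1 h2 h3 h4 h5 h6 h7)?)
qed


end
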